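(* Let $G\subset\mathfrak{S}_6$ be a subgroup isomorphic to $\mathfrak{S}_5$ that acts transitively on $\{0,1,\ldots,5\}$ (a non-standard $\mathfrak{S}_5$), acting on $\mathbb{P}^4=\{x_0+\cdots+x_5=0\}\subset\mathbb{P}^5$ by permuting the coordinates. Let $\Sigma_{10}\subset\mathbb{P}^4$ be the $\mathfrak{S}_6$-orbit of the point $[-1:-1:-1:1:1:1]$. Let $X$ be a $G$-invariant quartic threefold in $\mathbb{P}^4$ that contains $\Sigma_{10}$. Then $X=X_{\frac{1}{6}}$.
   Context: For $t\in\mathbb{C}$, $X_t\subset\mathbb{P}^4=\{x_0+\cdots+x_5=0\}\subset\mathbb{P}^5$ denotes the quartic threefold given by $\sum_{i=0}^5x_i^4=t\big(\sum_{i=0}^5x_i^2\big)^2$. *)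

theory Defs
  imports Complex_Main "HOL-Algebra.Sym_Groups"
begin

definition Sym :: "nat \<Rightarrow> (nat \<Rightarrow> nat) monoid" where
  "Sym n = \<lparr>carrier = {p. p permutes {..<n}}, mult = (\<circ>), one = id\<rparr>"

text \<open>Points of C^6 are functions nat => complex; only coordinates 0..5 matter.
  The hyperplane P^4 = {x_0 + ... + x_5 = 0} (affine cone).\<close>
definition hyperplane :: "(nat \<Rightarrow> complex) set" where
  "hyperplane = {x. (\<Sum>i<6. x i) = 0}"

definition quartic_exps :: "(nat \<Rightarrow> nat) set" where
  "quartic_exps = {\<alpha>. (\<forall>i\<ge>6. \<alpha> i = 0) \<and> (\<Sum>i<6. \<alpha> i) = 4}"

definition quartic_form :: "((nat \<Rightarrow> complex) \<Rightarrow> complex) \<Rightarrow> bool" where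
  "quartic_form F \<longleftrightarrow> (\<exists>a :: (nat \<Rightarrow> nat) \<Rightarrow> complex.
      \<forall>x. F x = (\<Sum>\<alpha>\<in>quartic_exps. a \<alpha> * (\<Prod>i<6. x i ^ \<alpha> i)))"

definition quartic_threefold_eq :: "((nat \<Rightarrow> complex) \<Rightarrow> complex) \<Rightarrow> bool" where
  "quartic_threefold_eq F \<longleftrightarrow> quartic_form F \<and> (\<exists>x\<in>hyperplane. F x \<noteq> 0)"

definition Xt_eq :: "complex \<Rightarrow> (nat \<Rightarrow> complex) \<Rightarrow> complex" where
  "Xt_eq t x = (\<Sum>i<6. x i ^ 4) - t * (\<Sum>i<6. x i ^ 2)\<^sup>2"

text \<open>The hypersurface {F = 0} is invariant under the coordinate permutation g
  (as a divisor: F composed with g is proportional to F on P^4).\<close>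
definition invariant_under :: "((nat \<Rightarrow> complex) \<Rightarrow> complex) \<Rightarrow> (nat \<Rightarrow> nat) \<Rightarrow> bool" where
  "invariant_under F g \<longleftrightarrow> (\<exists>c. \<forall>x\<in>hyperplane. F (x \<circ> g) = c * F x)"

definition Sigma10 :: "(nat \<Rightarrow> complex) set" where
  "Sigma10 = {(\<lambda>i. (\<lambda>j. if j < 3 then -1 else if j < 6 then 1 else 0) (p i)) | p. p permutes {..<6}}"

end

theory Submission
  imports Defs "HOL-Combinatorics.List_Permutation"
begin


definition a0 :: "nat \<Rightarrow> nat" where
  "a0 n = (if n < 4 then n+1 else if n = 4 then 0 else n)"
definition b0 :: "nat \<Rightarrow> nat" where
  "b0 n = (if n = 1 then 2 else if n = 2 then 4 else if n = 3 then 1 else if n = 4 then 3 else n)"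
definition rg :: "nat \<Rightarrow> nat" where
  "rg n = (if n = 0 then 5 else if n = 1 then 4 else if n = 4 then 1 else if n = 5 then 0 else n)"

lemma a0_pow: "(a0 ^^ i) n = (if n < 5 then (n + i) mod 5 else n)"
  by (induction i) (auto simp: a0_def mod_Suc)

lemma b0_4: "b0 (b0 (b0 (b0 n))) = n"
  by (simp add: b0_def)

lemma b0_pow: "(b0 ^^ j) n = (if j mod 4 = 0 then n else if j mod 4 = 1 then b0 n
   else if j mod 4 = 2 then b0 (b0 n) else b0 (b0 (b0 n)))"
proof (induction j)
  case 0 then show ?case by simp
next
  case (Suc j)
  have "j mod 4 = 0 \<or> j mod 4 = 1 \<or> j mod 4 = 2 \<or> j mod 4 = 3" by arith
  then show ?case using Suc by (auto simp: mod_Suc b0_4)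
qed

definition wrd :: "nat \<times> nat \<times> nat \<times> nat \<Rightarrow> nat \<Rightarrow> nat" where
  "wrd p = (case p of (t, i, j, k) \<Rightarrow>
     if t = 0 then (a0 ^^ i) \<circ> (b0 ^^ j) else (a0 ^^ i) \<circ> (b0 ^^ j) \<circ> rg \<circ> (a0 ^^ k))"

lemmas wv_simps = wrd_def a0_pow b0_pow rg_def b0_def a0_def

lemma lt6: "(i::nat) < 6 \<longleftrightarrow> i = 0 \<or> i = 1 \<or> i = 2 \<or> i = 3 \<or> i = 4 \<or> i = 5" by arith

lemma all6: "(\<forall>i<(6::nat). P i) \<longleftrightarrow> P 0 \<and> P 1 \<and> P 2 \<and> P 3 \<and> P 4 \<and> P 5"
  by (simp only: lt6) blast

lemma six: "{..<6::nat} = {0,1,2,3,4,5}" by (auto simp: lt6)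

lemma fun_eq6: fixes f g :: "nat \<Rightarrow> 'a" assumes "\<And>n. n \<ge> 6 \<Longrightarrow> f n = g n" "\<forall>n<6. f n = g n" shows "f = g"
proof (rule ext)
  fix n
  show "f n = g n" using assms by (cases "n < 6") auto
qed

definition pgrp :: "(nat \<Rightarrow> nat) set \<Rightarrow> bool" where
  "pgrp G \<longleftrightarrow> (\<forall>g\<in>G. g permutes {..<6}) \<and> id \<in> G \<and> (\<forall>g\<in>G. \<forall>h\<in>G. g \<circ> h \<in> G) \<and> (\<forall>g\<in>G. Hilbert_Choice.inv g \<in> G)"

definition q0 :: "nat \<Rightarrow> complex" where
  "q0 i = (if i < 3 then -1 else if i < 6 then 1 else 0)"

definition mon :: "(nat \<Rightarrow> nat) \<Rightarrow> (nat \<Rightarrow> complex) \<Rightarrow> complex" where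
  "mon \<alpha> y = (\<Prod>i<6. y i ^ \<alpha> i)"

definition Triples :: "(nat \<times> nat \<times> nat) set" where
  "Triples = {(i,j,l). i < 6 \<and> j < 6 \<and> l < 6 \<and> i \<noteq> j \<and> i \<noteq> l \<and> j \<noteq> l}"

definition T3 :: "(nat \<Rightarrow> nat) \<Rightarrow> nat \<times> nat \<times> nat" where
  "T3 g = (g 0, g 1, g 2)"

lemma hyp_perm: "x \<in> hyperplane \<Longrightarrow> g permutes {..<6} \<Longrightarrow> x \<circ> g \<in> hyperplane"
  unfolding hyperplane_def using sum.permute[of g "{..<6}" x] by auto

lemma a0_5: "a0 ^^ 5 = id"
  by (rule ext) (simp add: a0_pow)

lemma b0a0: "b0 \<circ> a0 = a0 \<circ> a0 \<circ> b0"
  by (rule fun_eq6) (auto simp: a0_def b0_def all6)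

lemma rgrg: "rg \<circ> rg = id"
  by (rule fun_eq6) (auto simp: rg_def all6)

lemma pow3: "f ^^ 3 = f \<circ> f \<circ> f"
  by (simp add: numeral_3_eq_3 o_assoc)

lemma rga0: "(rg \<circ> a0) ^^ 3 = id"
  unfolding pow3 by (rule fun_eq6) (auto simp: rg_def a0_def all6)

lemma rgb0: "rg \<circ> b0 \<circ> rg = b0 ^^ 3"
  unfolding pow3 by (rule fun_eq6) (auto simp: rg_def b0_def all6)

lemma card_Triples: "card Triples = 120"
proof -
  have TS: "Triples = Sigma {..<6} (\<lambda>i. Sigma ({..<6} - {i}) (\<lambda>j. {..<6} - {i,j}))"
    unfolding Triples_def by auto
  have C20: "card (Sigma ({..<6::nat} - {i}) (\<lambda>j. {..<6} - {i,j})) = 20" if "i < 6" for i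
  proof -
    have "card (Sigma ({..<6::nat} - {i}) (\<lambda>j. {..<6} - {i,j})) = (\<Sum>j\<in>{..<6} - {i}. card ({..<6::nat} - {i,j}))"
      by (rule card_SigmaI) auto
    also have "\<dots> = (\<Sum>j\<in>{..<6::nat} - {i}. 4)"
    proof (rule sum.cong)
      fix j assume "j \<in> {..<6::nat} - {i}"
      then show "card ({..<6::nat} - {i,j}) = 4" using that by (subst card_Diff_subset) auto
    qed simp
    also have "\<dots> = 20" using that by simp
    finally show ?thesis .
  qed
  have "card Triples = (\<Sum>i<6. card (Sigma ({..<6::nat} - {i}) (\<lambda>j. {..<6} - {i,j})))"
    unfolding TS by (rule card_SigmaI) auto
  also have "\<dots> = (\<Sum>i<6::nat. 20)" using C20 by (intro sum.cong) auto
  finally show ?thesis by simp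
qed

locale core =
  fixes G :: "(nat \<Rightarrow> nat) set" and F :: "(nat \<Rightarrow> complex) \<Rightarrow> complex"
  assumes pg: "pgrp G" and cardG: "card G = 120"
    and a0G: "a0 \<in> G" and b0G: "b0 \<in> G" and rgG: "rg \<in> G"
    and qf: "quartic_form F" and invF: "\<forall>g\<in>G. invariant_under F g"
    and nz: "\<exists>x\<in>hyperplane. F x \<noteq> 0" and zq: "F q0 = 0"
begin

lemma G_perm: "g \<in> G \<Longrightarrow> g permutes {..<6}" using pg unfolding pgrp_def by auto
lemma G_comp: "g \<in> G \<Longrightarrow> h \<in> G \<Longrightarrow> g \<circ> h \<in> G" using pg unfolding pgrp_def by auto
lemma G_id: "id \<in> G" using pg unfolding pgrp_def by auto
lemma G_inv: "g \<in> G \<Longrightarrow> Hilbert_Choice.inv g \<in> G" using pg unfolding pgrp_def by auto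
lemma G_pow: "g \<in> G \<Longrightarrow> g ^^ n \<in> G"
  by (induction n) (auto simp: G_id G_comp)
lemma finG: "finite G" using cardG by (metis card.infinite zero_neq_numeral)

lemma wrd_G: "wrd p \<in> G"
  by (auto simp: wrd_def G_comp G_pow a0G b0G rgG split: prod.splits)

lemma surj0: "\<forall>i<6. \<forall>j<6. \<forall>l<6. i \<noteq> j \<and> i \<noteq> l \<and> j \<noteq> l \<longrightarrow>
   (\<exists>p. wrd p 0 = i \<and> wrd p 1 = j \<and> wrd p 2 = l)"
  unfolding all6
  apply (intro conjI impI)
  subgoal by simp
  subgoal by simp
  subgoal by simp
  subgoal by simp
  subgoal by simp
  subgoal by simp
  subgoal by simp
  subgoal by simp
  subgoal by (rule exI[of _ "(0,0,0,0)"]) (simp add: wv_simps)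
  subgoal by (rule exI[of _ "(1,2,1,1)"]) (simp add: wv_simps)
  subgoal by (rule exI[of _ "(1,3,0,2)"]) (simp add: wv_simps)
  subgoal by (rule exI[of _ "(1,4,1,3)"]) (simp add: wv_simps)
  subgoal by simp
  subgoal by (rule exI[of _ "(1,4,2,1)"]) (simp add: wv_simps)
  subgoal by simp
  subgoal by (rule exI[of _ "(1,1,1,2)"]) (simp add: wv_simps)
  subgoal by (rule exI[of _ "(0,0,1,0)"]) (simp add: wv_simps)
  subgoal by (rule exI[of _ "(1,3,2,3)"]) (simp add: wv_simps)
  subgoal by simp
  subgoal by (rule exI[of _ "(0,0,3,0)"]) (simp add: wv_simps)
  subgoal by (rule exI[of _ "(1,4,3,2)"]) (simp add: wv_simps)
  subgoal by simp
  subgoal by (rule exI[of _ "(1,1,0,1)"]) (simp add: wv_simps)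
  subgoal by (rule exI[of _ "(1,2,0,3)"]) (simp add: wv_simps)
  subgoal by simp
  subgoal by (rule exI[of _ "(1,2,2,2)"]) (simp add: wv_simps)
  subgoal by (rule exI[of _ "(1,3,3,1)"]) (simp add: wv_simps)
  subgoal by (rule exI[of _ "(0,0,2,0)"]) (simp add: wv_simps)
  subgoal by simp
  subgoal by (rule exI[of _ "(1,1,3,3)"]) (simp add: wv_simps)
  subgoal by simp
  subgoal by (rule exI[of _ "(1,3,1,4)"]) (simp add: wv_simps)
  subgoal by (rule exI[of _ "(1,1,2,4)"]) (simp add: wv_simps)
  subgoal by (rule exI[of _ "(1,4,0,4)"]) (simp add: wv_simps)
  subgoal by (rule exI[of _ "(1,2,3,4)"]) (simp add: wv_simps)
  subgoal by simp
  subgoal by simp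
  subgoal by simp
  subgoal by (rule exI[of _ "(1,3,2,2)"]) (simp add: wv_simps)
  subgoal by (rule exI[of _ "(1,4,3,1)"]) (simp add: wv_simps)
  subgoal by (rule exI[of _ "(0,1,2,0)"]) (simp add: wv_simps)
  subgoal by (rule exI[of _ "(1,2,3,3)"]) (simp add: wv_simps)
  subgoal by simp
  subgoal by simp
  subgoal by simp
  subgoal by simp
  subgoal by simp
  subgoal by simp
  subgoal by (rule exI[of _ "(1,4,0,2)"]) (simp add: wv_simps)
  subgoal by simp
  subgoal by simp
  subgoal by (rule exI[of _ "(0,1,0,0)"]) (simp add: wv_simps)
  subgoal by (rule exI[of _ "(1,3,1,1)"]) (simp add: wv_simps)
  subgoal by (rule exI[of _ "(1,0,1,3)"]) (simp add: wv_simps)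
  subgoal by (rule exI[of _ "(0,1,1,0)"]) (simp add: wv_simps)
  subgoal by simp
  subgoal by (rule exI[of _ "(1,0,2,1)"]) (simp add: wv_simps)
  subgoal by simp
  subgoal by (rule exI[of _ "(1,2,1,2)"]) (simp add: wv_simps)
  subgoal by (rule exI[of _ "(1,4,2,3)"]) (simp add: wv_simps)
  subgoal by (rule exI[of _ "(1,2,0,1)"]) (simp add: wv_simps)
  subgoal by simp
  subgoal by (rule exI[of _ "(0,1,3,0)"]) (simp add: wv_simps)
  subgoal by (rule exI[of _ "(1,0,3,2)"]) (simp add: wv_simps)
  subgoal by simp
  subgoal by (rule exI[of _ "(1,3,0,3)"]) (simp add: wv_simps)
  subgoal by (rule exI[of _ "(1,3,3,4)"]) (simp add: wv_simps)
  subgoal by simp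
  subgoal by (rule exI[of _ "(1,4,1,4)"]) (simp add: wv_simps)
  subgoal by (rule exI[of _ "(1,2,2,4)"]) (simp add: wv_simps)
  subgoal by (rule exI[of _ "(1,0,0,4)"]) (simp add: wv_simps)
  subgoal by simp
  subgoal by simp
  subgoal by (rule exI[of _ "(1,3,0,1)"]) (simp add: wv_simps)
  subgoal by simp
  subgoal by (rule exI[of _ "(0,2,3,0)"]) (simp add: wv_simps)
  subgoal by (rule exI[of _ "(1,1,3,2)"]) (simp add: wv_simps)
  subgoal by (rule exI[of _ "(1,4,0,3)"]) (simp add: wv_simps)
  subgoal by (rule exI[of _ "(0,2,2,0)"]) (simp add: wv_simps)
  subgoal by simp
  subgoal by simp
  subgoal by (rule exI[of _ "(1,4,2,2)"]) (simp add: wv_simps)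
  subgoal by (rule exI[of _ "(1,0,3,1)"]) (simp add: wv_simps)
  subgoal by (rule exI[of _ "(1,3,3,3)"]) (simp add: wv_simps)
  subgoal by simp
  subgoal by simp
  subgoal by simp
  subgoal by simp
  subgoal by simp
  subgoal by simp
  subgoal by (rule exI[of _ "(1,4,1,1)"]) (simp add: wv_simps)
  subgoal by (rule exI[of _ "(1,0,0,2)"]) (simp add: wv_simps)
  subgoal by simp
  subgoal by simp
  subgoal by (rule exI[of _ "(0,2,0,0)"]) (simp add: wv_simps)
  subgoal by (rule exI[of _ "(1,1,1,3)"]) (simp add: wv_simps)
  subgoal by (rule exI[of _ "(1,3,1,2)"]) (simp add: wv_simps)
  subgoal by (rule exI[of _ "(0,2,1,0)"]) (simp add: wv_simps)
  subgoal by simp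
  subgoal by (rule exI[of _ "(1,1,2,1)"]) (simp add: wv_simps)
  subgoal by simp
  subgoal by (rule exI[of _ "(1,0,2,3)"]) (simp add: wv_simps)
  subgoal by (rule exI[of _ "(1,1,0,4)"]) (simp add: wv_simps)
  subgoal by (rule exI[of _ "(1,4,3,4)"]) (simp add: wv_simps)
  subgoal by simp
  subgoal by (rule exI[of _ "(1,0,1,4)"]) (simp add: wv_simps)
  subgoal by (rule exI[of _ "(1,3,2,4)"]) (simp add: wv_simps)
  subgoal by simp
  subgoal by simp
  subgoal by (rule exI[of _ "(1,4,1,2)"]) (simp add: wv_simps)
  subgoal by (rule exI[of _ "(0,3,1,0)"]) (simp add: wv_simps)
  subgoal by simp
  subgoal by (rule exI[of _ "(1,2,2,1)"]) (simp add: wv_simps)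
  subgoal by (rule exI[of _ "(1,1,2,3)"]) (simp add: wv_simps)
  subgoal by (rule exI[of _ "(1,2,3,2)"]) (simp add: wv_simps)
  subgoal by simp
  subgoal by (rule exI[of _ "(1,4,0,1)"]) (simp add: wv_simps)
  subgoal by simp
  subgoal by (rule exI[of _ "(0,3,3,0)"]) (simp add: wv_simps)
  subgoal by (rule exI[of _ "(1,0,0,3)"]) (simp add: wv_simps)
  subgoal by (rule exI[of _ "(1,1,3,1)"]) (simp add: wv_simps)
  subgoal by (rule exI[of _ "(0,3,2,0)"]) (simp add: wv_simps)
  subgoal by simp
  subgoal by simp
  subgoal by (rule exI[of _ "(1,0,2,2)"]) (simp add: wv_simps)
  subgoal by (rule exI[of _ "(1,4,3,3)"]) (simp add: wv_simps)
  subgoal by simp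
  subgoal by simp
  subgoal by simp
  subgoal by simp
  subgoal by simp
  subgoal by simp
  subgoal by (rule exI[of _ "(0,3,0,0)"]) (simp add: wv_simps)
  subgoal by (rule exI[of _ "(1,0,1,1)"]) (simp add: wv_simps)
  subgoal by (rule exI[of _ "(1,1,0,2)"]) (simp add: wv_simps)
  subgoal by simp
  subgoal by simp
  subgoal by (rule exI[of _ "(1,2,1,3)"]) (simp add: wv_simps)
  subgoal by (rule exI[of _ "(1,4,2,4)"]) (simp add: wv_simps)
  subgoal by (rule exI[of _ "(1,2,0,4)"]) (simp add: wv_simps)
  subgoal by (rule exI[of _ "(1,0,3,4)"]) (simp add: wv_simps)
  subgoal by simp
  subgoal by (rule exI[of _ "(1,1,1,4)"]) (simp add: wv_simps)
  subgoal by simp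
  subgoal by simp
  subgoal by (rule exI[of _ "(0,4,0,0)"]) (simp add: wv_simps)
  subgoal by (rule exI[of _ "(1,1,1,1)"]) (simp add: wv_simps)
  subgoal by (rule exI[of _ "(1,2,0,2)"]) (simp add: wv_simps)
  subgoal by simp
  subgoal by (rule exI[of _ "(1,3,1,3)"]) (simp add: wv_simps)
  subgoal by (rule exI[of _ "(1,3,2,1)"]) (simp add: wv_simps)
  subgoal by simp
  subgoal by (rule exI[of _ "(1,0,1,2)"]) (simp add: wv_simps)
  subgoal by (rule exI[of _ "(0,4,1,0)"]) (simp add: wv_simps)
  subgoal by simp
  subgoal by (rule exI[of _ "(1,2,2,3)"]) (simp add: wv_simps)
  subgoal by (rule exI[of _ "(0,4,3,0)"]) (simp add: wv_simps)
  subgoal by (rule exI[of _ "(1,3,3,2)"]) (simp add: wv_simps)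
  subgoal by simp
  subgoal by (rule exI[of _ "(1,0,0,1)"]) (simp add: wv_simps)
  subgoal by simp
  subgoal by (rule exI[of _ "(1,1,0,3)"]) (simp add: wv_simps)
  subgoal by (rule exI[of _ "(1,1,2,2)"]) (simp add: wv_simps)
  subgoal by (rule exI[of _ "(1,2,3,1)"]) (simp add: wv_simps)
  subgoal by (rule exI[of _ "(0,4,2,0)"]) (simp add: wv_simps)
  subgoal by simp
  subgoal by simp
  subgoal by (rule exI[of _ "(1,0,3,3)"]) (simp add: wv_simps)
  subgoal by simp
  subgoal by simp
  subgoal by simp
  subgoal by simp
  subgoal by simp
  subgoal by simp
  subgoal by (rule exI[of _ "(1,2,1,4)"]) (simp add: wv_simps)
  subgoal by (rule exI[of _ "(1,0,2,4)"]) (simp add: wv_simps)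
  subgoal by (rule exI[of _ "(1,3,0,4)"]) (simp add: wv_simps)
  subgoal by (rule exI[of _ "(1,1,3,4)"]) (simp add: wv_simps)
  subgoal by simp
  subgoal by simp
  subgoal by simp
  subgoal by (rule exI[of _ "(1,2,1,0)"]) (simp add: wv_simps)
  subgoal by (rule exI[of _ "(1,4,2,0)"]) (simp add: wv_simps)
  subgoal by (rule exI[of _ "(1,1,0,0)"]) (simp add: wv_simps)
  subgoal by (rule exI[of _ "(1,3,3,0)"]) (simp add: wv_simps)
  subgoal by simp
  subgoal by (rule exI[of _ "(1,4,3,0)"]) (simp add: wv_simps)
  subgoal by simp
  subgoal by (rule exI[of _ "(1,3,1,0)"]) (simp add: wv_simps)
  subgoal by (rule exI[of _ "(1,0,2,0)"]) (simp add: wv_simps)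
  subgoal by (rule exI[of _ "(1,2,0,0)"]) (simp add: wv_simps)
  subgoal by simp
  subgoal by (rule exI[of _ "(1,3,0,0)"]) (simp add: wv_simps)
  subgoal by (rule exI[of _ "(1,0,3,0)"]) (simp add: wv_simps)
  subgoal by simp
  subgoal by (rule exI[of _ "(1,4,1,0)"]) (simp add: wv_simps)
  subgoal by (rule exI[of _ "(1,1,2,0)"]) (simp add: wv_simps)
  subgoal by simp
  subgoal by (rule exI[of _ "(1,2,2,0)"]) (simp add: wv_simps)
  subgoal by (rule exI[of _ "(1,4,0,0)"]) (simp add: wv_simps)
  subgoal by (rule exI[of _ "(1,1,3,0)"]) (simp add: wv_simps)
  subgoal by simp
  subgoal by (rule exI[of _ "(1,0,1,0)"]) (simp add: wv_simps)
  subgoal by simp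
  subgoal by (rule exI[of _ "(1,1,1,0)"]) (simp add: wv_simps)
  subgoal by (rule exI[of _ "(1,3,2,0)"]) (simp add: wv_simps)
  subgoal by (rule exI[of _ "(1,0,0,0)"]) (simp add: wv_simps)
  subgoal by (rule exI[of _ "(1,2,3,0)"]) (simp add: wv_simps)
  subgoal by simp
  subgoal by simp
  subgoal by simp
  subgoal by simp
  subgoal by simp
  subgoal by simp
  subgoal by simp
  subgoal by simp
  done

lemma T3_G: "g \<in> G \<Longrightarrow> T3 g \<in> Triples"
proof -
  assume g: "g \<in> G"
  then have p: "g permutes {..<6}" by (rule G_perm)
  then have "inj g" by (rule permutes_inj)
  moreover have "g 0 < 6" "g 1 < 6" "g 2 < 6" using permutes_in_image[OF p] by auto
  ultimately show ?thesis unfolding T3_def Triples_def by (simp add: inj_eq)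
qed

lemma T3_img: "T3 ` G = Triples"
proof
  show "T3 ` G \<subseteq> Triples" using T3_G by auto
  show "Triples \<subseteq> T3 ` G"
  proof
    fix t assume "t \<in> Triples"
    then obtain i j l where t: "t = (i,j,l)" "i < 6" "j < 6" "l < 6" "i \<noteq> j" "i \<noteq> l" "j \<noteq> l"
      unfolding Triples_def by auto
    then obtain p where "wrd p 0 = i \<and> wrd p 1 = j \<and> wrd p 2 = l" using surj0 by blast
    then have "T3 (wrd p) = t" using t by (simp add: T3_def)
    then show "t \<in> T3 ` G" using wrd_G by (metis image_eqI)
  qed
qed

lemma T3_inj: "inj_on T3 G"
proof -
  have "card (T3 ` G) = card G" using T3_img card_Triples cardG by simp
  then show ?thesis using finG by (simp add: inj_on_iff_eq_card)
qed

definition x0 where "x0 = (SOME x. x \<in> hyperplane \<and> F x \<noteq> 0)"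
lemma x0: "x0 \<in> hyperplane" "F x0 \<noteq> 0"
  using someI_ex[OF nz[unfolded Bex_def]] unfolding x0_def by auto

definition chi :: "(nat \<Rightarrow> nat) \<Rightarrow> complex" where "chi g = F (x0 \<circ> g) / F x0"

lemma inv_chi: "g \<in> G \<Longrightarrow> x \<in> hyperplane \<Longrightarrow> F (x \<circ> g) = chi g * F x"
proof -
  assume g: "g \<in> G" and x: "x \<in> hyperplane"
  obtain c where c: "\<forall>y\<in>hyperplane. F (y \<circ> g) = c * F y"
    using invF g unfolding invariant_under_def by auto
  have "chi g = c" using c x0 unfolding chi_def by auto
  then show ?thesis using c x by auto
qed

lemma chi_mult: "g \<in> G \<Longrightarrow> h \<in> G \<Longrightarrow> chi (g \<circ> h) = chi g * chi h"
proof -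
  assume g: "g \<in> G" and h: "h \<in> G"
  have "F (x0 \<circ> (g \<circ> h)) = F ((x0 \<circ> g) \<circ> h)" by (simp add: o_assoc)
  also have "\<dots> = chi h * F (x0 \<circ> g)" using inv_chi[OF h hyp_perm[OF x0(1) G_perm[OF g]]] .
  also have "\<dots> = chi h * (chi g * F x0)" using inv_chi[OF g x0(1)] by simp
  finally show ?thesis unfolding chi_def[of "g \<circ> h"] using x0(2) by simp
qed

lemma chi_id: "chi id = 1" using x0 unfolding chi_def by simp

lemma chi_pow: "g \<in> G \<Longrightarrow> chi (g ^^ n) = chi g ^ n"
  by (induction n) (auto simp: chi_id chi_mult G_pow)

lemma chi_nz: "g \<in> G \<Longrightarrow> chi g \<noteq> 0"
proof
  assume g: "g \<in> G" and "chi g = 0"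
  have "g \<circ> Hilbert_Choice.inv g = id" using permutes_inv_o(1)[OF G_perm[OF g]] .
  then have "chi g * chi (Hilbert_Choice.inv g) = 1" using chi_mult[OF g G_inv[OF g]] chi_id by simp
  with \<open>chi g = 0\<close> show False by simp
qed

lemma chi_a0: "chi a0 = 1"
proof -
  have 1: "chi a0 ^ 5 = 1" using chi_pow[OF a0G, of 5] a0_5 chi_id by simp
  have "chi b0 * chi a0 = chi a0 * chi a0 * chi b0"
    using arg_cong[OF b0a0, of chi] by (simp add: chi_mult a0G b0G G_comp)
  then have "chi a0 * chi a0 = chi a0" using chi_nz[OF b0G] by (simp add: mult.commute)
  then have "chi a0 * (chi a0 - 1) = 0" by (simp add: algebra_simps)
  then have "chi a0 = 1 \<or> chi a0 = 0" by auto
  then show ?thesis using 1 by auto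
qed

lemma chi_rg: "chi rg = 1"
proof -
  have 1: "chi rg * chi rg = 1" using arg_cong[OF rgrg, of chi] by (simp add: chi_mult rgG chi_id)
  have "chi (rg \<circ> a0) ^ 3 = 1" using chi_pow[OF G_comp[OF rgG a0G], of 3] rga0 chi_id by simp
  then have "chi rg ^ 3 = 1" by (simp add: chi_mult rgG a0G chi_a0)
  then show ?thesis using 1 by (simp add: power3_eq_cube)
qed

definition eps :: complex ("\<epsilon>") where "\<epsilon> = chi b0"

lemma eps2: "\<epsilon> * \<epsilon> = 1"
proof -
  have "chi rg * chi b0 * chi rg = chi b0 ^ 3"
    using arg_cong[OF rgb0, of chi] by (simp add: chi_mult chi_pow rgG b0G G_comp)
  then have "chi b0 = chi b0 ^ 3" by (simp add: chi_rg)
  then have "chi b0 * (chi b0 * chi b0) = chi b0 * 1" by (simp add: power3_eq_cube)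
  then show ?thesis using chi_nz[OF b0G] unfolding eps_def by (metis mult_left_cancel)
qed

lemma eps_cases: "\<epsilon> = 1 \<or> \<epsilon> = -1"
proof -
  have "(\<epsilon> - 1) * (\<epsilon> + 1) = 0" using eps2 by (simp add: algebra_simps)
  then show ?thesis by (auto simp: eq_neg_iff_add_eq_0)
qed

lemma chi_wrd: "chi (wrd (t,i,j,k)) = \<epsilon> ^ j"
  by (simp add: wrd_def chi_mult chi_pow G_comp G_pow a0G b0G rgG chi_a0 chi_rg eps_def)

definition Tinv :: "nat \<times> nat \<times> nat \<Rightarrow> nat \<Rightarrow> nat" where "Tinv = inv_into G T3"
definition C :: "nat \<times> nat \<times> nat \<Rightarrow> complex" where "C t = chi (Tinv t)"

lemma C_wrd: "T3 (wrd (t,i,j,k)) = tr \<Longrightarrow> C tr = \<epsilon> ^ j"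
proof -
  assume "T3 (wrd (t,i,j,k)) = tr"
  then have "Tinv tr = wrd (t,i,j,k)" unfolding Tinv_def by (rule inv_into_f_eq[OF T3_inj wrd_G])
  then show ?thesis unfolding C_def by (simp add: chi_wrd)
qed

lemma C_0_1_2: "C (0,1,2) = \<epsilon> ^ 0"
  by (rule C_wrd[of 0 0 0 0]) (simp add: wv_simps T3_def)
lemma C_0_1_3: "C (0,1,3) = \<epsilon> ^ 1"
  by (rule C_wrd[of 1 2 1 1]) (simp add: wv_simps T3_def)
lemma C_0_1_4: "C (0,1,4) = \<epsilon> ^ 0"
  by (rule C_wrd[of 1 3 0 2]) (simp add: wv_simps T3_def)
lemma C_0_1_5: "C (0,1,5) = \<epsilon> ^ 1"
  by (rule C_wrd[of 1 4 1 3]) (simp add: wv_simps T3_def)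
lemma C_0_2_1: "C (0,2,1) = \<epsilon> ^ 2"
  by (rule C_wrd[of 1 4 2 1]) (simp add: wv_simps T3_def)
lemma C_0_2_3: "C (0,2,3) = \<epsilon> ^ 1"
  by (rule C_wrd[of 1 1 1 2]) (simp add: wv_simps T3_def)
lemma C_0_2_4: "C (0,2,4) = \<epsilon> ^ 1"
  by (rule C_wrd[of 0 0 1 0]) (simp add: wv_simps T3_def)
lemma C_0_2_5: "C (0,2,5) = \<epsilon> ^ 2"
  by (rule C_wrd[of 1 3 2 3]) (simp add: wv_simps T3_def)
lemma C_0_3_1: "C (0,3,1) = \<epsilon> ^ 3"
  by (rule C_wrd[of 0 0 3 0]) (simp add: wv_simps T3_def)
lemma C_0_3_2: "C (0,3,2) = \<epsilon> ^ 3"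
  by (rule C_wrd[of 1 4 3 2]) (simp add: wv_simps T3_def)
lemma C_0_3_4: "C (0,3,4) = \<epsilon> ^ 0"
  by (rule C_wrd[of 1 1 0 1]) (simp add: wv_simps T3_def)
lemma C_0_3_5: "C (0,3,5) = \<epsilon> ^ 0"
  by (rule C_wrd[of 1 2 0 3]) (simp add: wv_simps T3_def)
lemma C_0_4_1: "C (0,4,1) = \<epsilon> ^ 2"
  by (rule C_wrd[of 1 2 2 2]) (simp add: wv_simps T3_def)
lemma C_0_4_2: "C (0,4,2) = \<epsilon> ^ 3"
  by (rule C_wrd[of 1 3 3 1]) (simp add: wv_simps T3_def)
lemma C_0_4_3: "C (0,4,3) = \<epsilon> ^ 2"
  by (rule C_wrd[of 0 0 2 0]) (simp add: wv_simps T3_def)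
lemma C_0_4_5: "C (0,4,5) = \<epsilon> ^ 3"
  by (rule C_wrd[of 1 1 3 3]) (simp add: wv_simps T3_def)
lemma C_0_5_1: "C (0,5,1) = \<epsilon> ^ 1"
  by (rule C_wrd[of 1 3 1 4]) (simp add: wv_simps T3_def)
lemma C_0_5_2: "C (0,5,2) = \<epsilon> ^ 2"
  by (rule C_wrd[of 1 1 2 4]) (simp add: wv_simps T3_def)
lemma C_0_5_3: "C (0,5,3) = \<epsilon> ^ 0"
  by (rule C_wrd[of 1 4 0 4]) (simp add: wv_simps T3_def)
lemma C_0_5_4: "C (0,5,4) = \<epsilon> ^ 3"
  by (rule C_wrd[of 1 2 3 4]) (simp add: wv_simps T3_def)
lemma C_1_0_2: "C (1,0,2) = \<epsilon> ^ 2"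
  by (rule C_wrd[of 1 3 2 2]) (simp add: wv_simps T3_def)
lemma C_1_0_3: "C (1,0,3) = \<epsilon> ^ 3"
  by (rule C_wrd[of 1 4 3 1]) (simp add: wv_simps T3_def)
lemma C_1_0_4: "C (1,0,4) = \<epsilon> ^ 2"
  by (rule C_wrd[of 0 1 2 0]) (simp add: wv_simps T3_def)
lemma C_1_0_5: "C (1,0,5) = \<epsilon> ^ 3"
  by (rule C_wrd[of 1 2 3 3]) (simp add: wv_simps T3_def)
lemma C_1_2_0: "C (1,2,0) = \<epsilon> ^ 0"
  by (rule C_wrd[of 1 4 0 2]) (simp add: wv_simps T3_def)
lemma C_1_2_3: "C (1,2,3) = \<epsilon> ^ 0"
  by (rule C_wrd[of 0 1 0 0]) (simp add: wv_simps T3_def)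
lemma C_1_2_4: "C (1,2,4) = \<epsilon> ^ 1"
  by (rule C_wrd[of 1 3 1 1]) (simp add: wv_simps T3_def)
lemma C_1_2_5: "C (1,2,5) = \<epsilon> ^ 1"
  by (rule C_wrd[of 1 0 1 3]) (simp add: wv_simps T3_def)
lemma C_1_3_0: "C (1,3,0) = \<epsilon> ^ 1"
  by (rule C_wrd[of 0 1 1 0]) (simp add: wv_simps T3_def)
lemma C_1_3_2: "C (1,3,2) = \<epsilon> ^ 2"
  by (rule C_wrd[of 1 0 2 1]) (simp add: wv_simps T3_def)
lemma C_1_3_4: "C (1,3,4) = \<epsilon> ^ 1"
  by (rule C_wrd[of 1 2 1 2]) (simp add: wv_simps T3_def)
lemma C_1_3_5: "C (1,3,5) = \<epsilon> ^ 2"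
  by (rule C_wrd[of 1 4 2 3]) (simp add: wv_simps T3_def)
lemma C_1_4_0: "C (1,4,0) = \<epsilon> ^ 0"
  by (rule C_wrd[of 1 2 0 1]) (simp add: wv_simps T3_def)
lemma C_1_4_2: "C (1,4,2) = \<epsilon> ^ 3"
  by (rule C_wrd[of 0 1 3 0]) (simp add: wv_simps T3_def)
lemma C_1_4_3: "C (1,4,3) = \<epsilon> ^ 3"
  by (rule C_wrd[of 1 0 3 2]) (simp add: wv_simps T3_def)
lemma C_1_4_5: "C (1,4,5) = \<epsilon> ^ 0"
  by (rule C_wrd[of 1 3 0 3]) (simp add: wv_simps T3_def)
lemma C_1_5_0: "C (1,5,0) = \<epsilon> ^ 3"
  by (rule C_wrd[of 1 3 3 4]) (simp add: wv_simps T3_def)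
lemma C_1_5_2: "C (1,5,2) = \<epsilon> ^ 1"
  by (rule C_wrd[of 1 4 1 4]) (simp add: wv_simps T3_def)
lemma C_1_5_3: "C (1,5,3) = \<epsilon> ^ 2"
  by (rule C_wrd[of 1 2 2 4]) (simp add: wv_simps T3_def)
lemma C_1_5_4: "C (1,5,4) = \<epsilon> ^ 0"
  by (rule C_wrd[of 1 0 0 4]) (simp add: wv_simps T3_def)
lemma C_2_0_1: "C (2,0,1) = \<epsilon> ^ 0"
  by (rule C_wrd[of 1 3 0 1]) (simp add: wv_simps T3_def)
lemma C_2_0_3: "C (2,0,3) = \<epsilon> ^ 3"
  by (rule C_wrd[of 0 2 3 0]) (simp add: wv_simps T3_def)
lemma C_2_0_4: "C (2,0,4) = \<epsilon> ^ 3"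
  by (rule C_wrd[of 1 1 3 2]) (simp add: wv_simps T3_def)
lemma C_2_0_5: "C (2,0,5) = \<epsilon> ^ 0"
  by (rule C_wrd[of 1 4 0 3]) (simp add: wv_simps T3_def)
lemma C_2_1_0: "C (2,1,0) = \<epsilon> ^ 2"
  by (rule C_wrd[of 0 2 2 0]) (simp add: wv_simps T3_def)
lemma C_2_1_3: "C (2,1,3) = \<epsilon> ^ 2"
  by (rule C_wrd[of 1 4 2 2]) (simp add: wv_simps T3_def)
lemma C_2_1_4: "C (2,1,4) = \<epsilon> ^ 3"
  by (rule C_wrd[of 1 0 3 1]) (simp add: wv_simps T3_def)
lemma C_2_1_5: "C (2,1,5) = \<epsilon> ^ 3"
  by (rule C_wrd[of 1 3 3 3]) (simp add: wv_simps T3_def)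
lemma C_2_3_0: "C (2,3,0) = \<epsilon> ^ 1"
  by (rule C_wrd[of 1 4 1 1]) (simp add: wv_simps T3_def)
lemma C_2_3_1: "C (2,3,1) = \<epsilon> ^ 0"
  by (rule C_wrd[of 1 0 0 2]) (simp add: wv_simps T3_def)
lemma C_2_3_4: "C (2,3,4) = \<epsilon> ^ 0"
  by (rule C_wrd[of 0 2 0 0]) (simp add: wv_simps T3_def)
lemma C_2_3_5: "C (2,3,5) = \<epsilon> ^ 1"
  by (rule C_wrd[of 1 1 1 3]) (simp add: wv_simps T3_def)
lemma C_2_4_0: "C (2,4,0) = \<epsilon> ^ 1"
  by (rule C_wrd[of 1 3 1 2]) (simp add: wv_simps T3_def)
lemma C_2_4_1: "C (2,4,1) = \<epsilon> ^ 1"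
  by (rule C_wrd[of 0 2 1 0]) (simp add: wv_simps T3_def)
lemma C_2_4_3: "C (2,4,3) = \<epsilon> ^ 2"
  by (rule C_wrd[of 1 1 2 1]) (simp add: wv_simps T3_def)
lemma C_2_4_5: "C (2,4,5) = \<epsilon> ^ 2"
  by (rule C_wrd[of 1 0 2 3]) (simp add: wv_simps T3_def)
lemma C_2_5_0: "C (2,5,0) = \<epsilon> ^ 0"
  by (rule C_wrd[of 1 1 0 4]) (simp add: wv_simps T3_def)
lemma C_2_5_1: "C (2,5,1) = \<epsilon> ^ 3"
  by (rule C_wrd[of 1 4 3 4]) (simp add: wv_simps T3_def)
lemma C_2_5_3: "C (2,5,3) = \<epsilon> ^ 1"
  by (rule C_wrd[of 1 0 1 4]) (simp add: wv_simps T3_def)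
lemma C_2_5_4: "C (2,5,4) = \<epsilon> ^ 2"
  by (rule C_wrd[of 1 3 2 4]) (simp add: wv_simps T3_def)
lemma C_3_0_1: "C (3,0,1) = \<epsilon> ^ 1"
  by (rule C_wrd[of 1 4 1 2]) (simp add: wv_simps T3_def)
lemma C_3_0_2: "C (3,0,2) = \<epsilon> ^ 1"
  by (rule C_wrd[of 0 3 1 0]) (simp add: wv_simps T3_def)
lemma C_3_0_4: "C (3,0,4) = \<epsilon> ^ 2"
  by (rule C_wrd[of 1 2 2 1]) (simp add: wv_simps T3_def)
lemma C_3_0_5: "C (3,0,5) = \<epsilon> ^ 2"
  by (rule C_wrd[of 1 1 2 3]) (simp add: wv_simps T3_def)
lemma C_3_1_0: "C (3,1,0) = \<epsilon> ^ 3"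
  by (rule C_wrd[of 1 2 3 2]) (simp add: wv_simps T3_def)
lemma C_3_1_2: "C (3,1,2) = \<epsilon> ^ 0"
  by (rule C_wrd[of 1 4 0 1]) (simp add: wv_simps T3_def)
lemma C_3_1_4: "C (3,1,4) = \<epsilon> ^ 3"
  by (rule C_wrd[of 0 3 3 0]) (simp add: wv_simps T3_def)
lemma C_3_1_5: "C (3,1,5) = \<epsilon> ^ 0"
  by (rule C_wrd[of 1 0 0 3]) (simp add: wv_simps T3_def)
lemma C_3_2_0: "C (3,2,0) = \<epsilon> ^ 3"
  by (rule C_wrd[of 1 1 3 1]) (simp add: wv_simps T3_def)
lemma C_3_2_1: "C (3,2,1) = \<epsilon> ^ 2"
  by (rule C_wrd[of 0 3 2 0]) (simp add: wv_simps T3_def)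
lemma C_3_2_4: "C (3,2,4) = \<epsilon> ^ 2"
  by (rule C_wrd[of 1 0 2 2]) (simp add: wv_simps T3_def)
lemma C_3_2_5: "C (3,2,5) = \<epsilon> ^ 3"
  by (rule C_wrd[of 1 4 3 3]) (simp add: wv_simps T3_def)
lemma C_3_4_0: "C (3,4,0) = \<epsilon> ^ 0"
  by (rule C_wrd[of 0 3 0 0]) (simp add: wv_simps T3_def)
lemma C_3_4_1: "C (3,4,1) = \<epsilon> ^ 1"
  by (rule C_wrd[of 1 0 1 1]) (simp add: wv_simps T3_def)
lemma C_3_4_2: "C (3,4,2) = \<epsilon> ^ 0"
  by (rule C_wrd[of 1 1 0 2]) (simp add: wv_simps T3_def)
lemma C_3_4_5: "C (3,4,5) = \<epsilon> ^ 1"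
  by (rule C_wrd[of 1 2 1 3]) (simp add: wv_simps T3_def)
lemma C_3_5_0: "C (3,5,0) = \<epsilon> ^ 2"
  by (rule C_wrd[of 1 4 2 4]) (simp add: wv_simps T3_def)
lemma C_3_5_1: "C (3,5,1) = \<epsilon> ^ 0"
  by (rule C_wrd[of 1 2 0 4]) (simp add: wv_simps T3_def)
lemma C_3_5_2: "C (3,5,2) = \<epsilon> ^ 3"
  by (rule C_wrd[of 1 0 3 4]) (simp add: wv_simps T3_def)
lemma C_3_5_4: "C (3,5,4) = \<epsilon> ^ 1"
  by (rule C_wrd[of 1 1 1 4]) (simp add: wv_simps T3_def)
lemma C_4_0_1: "C (4,0,1) = \<epsilon> ^ 0"
  by (rule C_wrd[of 0 4 0 0]) (simp add: wv_simps T3_def)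
lemma C_4_0_2: "C (4,0,2) = \<epsilon> ^ 1"
  by (rule C_wrd[of 1 1 1 1]) (simp add: wv_simps T3_def)
lemma C_4_0_3: "C (4,0,3) = \<epsilon> ^ 0"
  by (rule C_wrd[of 1 2 0 2]) (simp add: wv_simps T3_def)
lemma C_4_0_5: "C (4,0,5) = \<epsilon> ^ 1"
  by (rule C_wrd[of 1 3 1 3]) (simp add: wv_simps T3_def)
lemma C_4_1_0: "C (4,1,0) = \<epsilon> ^ 2"
  by (rule C_wrd[of 1 3 2 1]) (simp add: wv_simps T3_def)
lemma C_4_1_2: "C (4,1,2) = \<epsilon> ^ 1"
  by (rule C_wrd[of 1 0 1 2]) (simp add: wv_simps T3_def)
lemma C_4_1_3: "C (4,1,3) = \<epsilon> ^ 1"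
  by (rule C_wrd[of 0 4 1 0]) (simp add: wv_simps T3_def)
lemma C_4_1_5: "C (4,1,5) = \<epsilon> ^ 2"
  by (rule C_wrd[of 1 2 2 3]) (simp add: wv_simps T3_def)
lemma C_4_2_0: "C (4,2,0) = \<epsilon> ^ 3"
  by (rule C_wrd[of 0 4 3 0]) (simp add: wv_simps T3_def)
lemma C_4_2_1: "C (4,2,1) = \<epsilon> ^ 3"
  by (rule C_wrd[of 1 3 3 2]) (simp add: wv_simps T3_def)
lemma C_4_2_3: "C (4,2,3) = \<epsilon> ^ 0"
  by (rule C_wrd[of 1 0 0 1]) (simp add: wv_simps T3_def)
lemma C_4_2_5: "C (4,2,5) = \<epsilon> ^ 0"
  by (rule C_wrd[of 1 1 0 3]) (simp add: wv_simps T3_def)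
lemma C_4_3_0: "C (4,3,0) = \<epsilon> ^ 2"
  by (rule C_wrd[of 1 1 2 2]) (simp add: wv_simps T3_def)
lemma C_4_3_1: "C (4,3,1) = \<epsilon> ^ 3"
  by (rule C_wrd[of 1 2 3 1]) (simp add: wv_simps T3_def)
lemma C_4_3_2: "C (4,3,2) = \<epsilon> ^ 2"
  by (rule C_wrd[of 0 4 2 0]) (simp add: wv_simps T3_def)
lemma C_4_3_5: "C (4,3,5) = \<epsilon> ^ 3"
  by (rule C_wrd[of 1 0 3 3]) (simp add: wv_simps T3_def)
lemma C_4_5_0: "C (4,5,0) = \<epsilon> ^ 1"
  by (rule C_wrd[of 1 2 1 4]) (simp add: wv_simps T3_def)
lemma C_4_5_1: "C (4,5,1) = \<epsilon> ^ 2"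
  by (rule C_wrd[of 1 0 2 4]) (simp add: wv_simps T3_def)
lemma C_4_5_2: "C (4,5,2) = \<epsilon> ^ 0"
  by (rule C_wrd[of 1 3 0 4]) (simp add: wv_simps T3_def)
lemma C_4_5_3: "C (4,5,3) = \<epsilon> ^ 3"
  by (rule C_wrd[of 1 1 3 4]) (simp add: wv_simps T3_def)
lemma C_5_0_1: "C (5,0,1) = \<epsilon> ^ 1"
  by (rule C_wrd[of 1 2 1 0]) (simp add: wv_simps T3_def)
lemma C_5_0_2: "C (5,0,2) = \<epsilon> ^ 2"
  by (rule C_wrd[of 1 4 2 0]) (simp add: wv_simps T3_def)
lemma C_5_0_3: "C (5,0,3) = \<epsilon> ^ 0"
  by (rule C_wrd[of 1 1 0 0]) (simp add: wv_simps T3_def)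
lemma C_5_0_4: "C (5,0,4) = \<epsilon> ^ 3"
  by (rule C_wrd[of 1 3 3 0]) (simp add: wv_simps T3_def)
lemma C_5_1_0: "C (5,1,0) = \<epsilon> ^ 3"
  by (rule C_wrd[of 1 4 3 0]) (simp add: wv_simps T3_def)
lemma C_5_1_2: "C (5,1,2) = \<epsilon> ^ 1"
  by (rule C_wrd[of 1 3 1 0]) (simp add: wv_simps T3_def)
lemma C_5_1_3: "C (5,1,3) = \<epsilon> ^ 2"
  by (rule C_wrd[of 1 0 2 0]) (simp add: wv_simps T3_def)
lemma C_5_1_4: "C (5,1,4) = \<epsilon> ^ 0"
  by (rule C_wrd[of 1 2 0 0]) (simp add: wv_simps T3_def)
lemma C_5_2_0: "C (5,2,0) = \<epsilon> ^ 0"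
  by (rule C_wrd[of 1 3 0 0]) (simp add: wv_simps T3_def)
lemma C_5_2_1: "C (5,2,1) = \<epsilon> ^ 3"
  by (rule C_wrd[of 1 0 3 0]) (simp add: wv_simps T3_def)
lemma C_5_2_3: "C (5,2,3) = \<epsilon> ^ 1"
  by (rule C_wrd[of 1 4 1 0]) (simp add: wv_simps T3_def)
lemma C_5_2_4: "C (5,2,4) = \<epsilon> ^ 2"
  by (rule C_wrd[of 1 1 2 0]) (simp add: wv_simps T3_def)
lemma C_5_3_0: "C (5,3,0) = \<epsilon> ^ 2"
  by (rule C_wrd[of 1 2 2 0]) (simp add: wv_simps T3_def)
lemma C_5_3_1: "C (5,3,1) = \<epsilon> ^ 0"
  by (rule C_wrd[of 1 4 0 0]) (simp add: wv_simps T3_def)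
lemma C_5_3_2: "C (5,3,2) = \<epsilon> ^ 3"
  by (rule C_wrd[of 1 1 3 0]) (simp add: wv_simps T3_def)
lemma C_5_3_4: "C (5,3,4) = \<epsilon> ^ 1"
  by (rule C_wrd[of 1 0 1 0]) (simp add: wv_simps T3_def)
lemma C_5_4_0: "C (5,4,0) = \<epsilon> ^ 1"
  by (rule C_wrd[of 1 1 1 0]) (simp add: wv_simps T3_def)
lemma C_5_4_1: "C (5,4,1) = \<epsilon> ^ 2"
  by (rule C_wrd[of 1 3 2 0]) (simp add: wv_simps T3_def)
lemma C_5_4_2: "C (5,4,2) = \<epsilon> ^ 0"
  by (rule C_wrd[of 1 0 0 0]) (simp add: wv_simps T3_def)
lemma C_5_4_3: "C (5,4,3) = \<epsilon> ^ 3"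
  by (rule C_wrd[of 1 2 3 0]) (simp add: wv_simps T3_def)
lemmas C_facts = C_0_1_2 C_0_1_3 C_0_1_4 C_0_1_5 C_0_2_1 C_0_2_3 C_0_2_4 C_0_2_5 C_0_3_1 C_0_3_2 C_0_3_4 C_0_3_5 C_0_4_1 C_0_4_2 C_0_4_3 C_0_4_5 C_0_5_1 C_0_5_2 C_0_5_3 C_0_5_4 C_1_0_2 C_1_0_3 C_1_0_4 C_1_0_5 C_1_2_0 C_1_2_3 C_1_2_4 C_1_2_5 C_1_3_0 C_1_3_2 C_1_3_4 C_1_3_5 C_1_4_0 C_1_4_2 C_1_4_3 C_1_4_5 C_1_5_0 C_1_5_2 C_1_5_3 C_1_5_4 C_2_0_1 C_2_0_3 C_2_0_4 C_2_0_5 C_2_1_0 C_2_1_3 C_2_1_4 C_2_1_5 C_2_3_0 C_2_3_1 C_2_3_4 C_2_3_5 C_2_4_0 C_2_4_1 C_2_4_3 C_2_4_5 C_2_5_0 C_2_5_1 C_2_5_3 C_2_5_4 C_3_0_1 C_3_0_2 C_3_0_4 C_3_0_5 C_3_1_0 C_3_1_2 C_3_1_4 C_3_1_5 C_3_2_0 C_3_2_1 C_3_2_4 C_3_2_5 C_3_4_0 C_3_4_1 C_3_4_2 C_3_4_5 C_3_5_0 C_3_5_1 C_3_5_2 C_3_5_4 C_4_0_1 C_4_0_2 C_4_0_3 C_4_0_5 C_4_1_0 C_4_1_2 C_4_1_3 C_4_1_5 C_4_2_0 C_4_2_1 C_4_2_3 C_4_2_5 C_4_3_0 C_4_3_1 C_4_3_2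 C_4_3_5 C_4_5_0 C_4_5_1 C_4_5_2 C_4_5_3 C_5_0_1 C_5_0_2 C_5_0_3 C_5_0_4 C_5_1_0 C_5_1_2 C_5_1_3 C_5_1_4 C_5_2_0 C_5_2_1 C_5_2_3 C_5_2_4 C_5_3_0 C_5_3_1 C_5_3_2 C_5_3_4 C_5_4_0 C_5_4_1 C_5_4_2 C_5_4_3

end


definition rep :: "nat \<Rightarrow> nat \<Rightarrow> nat" where
  "rep k n = (if n < 6 then [[4,0,0,0,0,0],[3,1,0,0,0,0],[2,2,0,0,0,0],[2,1,1,0,0,0],[0,0,1,1,1,1::nat]] ! k ! n else 0)"

lemma lt5: "(k::nat) < 5 \<longleftrightarrow> k = 0 \<or> k = 1 \<or> k = 2 \<or> k = 3 \<or> k = 4" by arith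

lemma rep_const: "k < 5 \<Longrightarrow> 3 \<le> m \<Longrightarrow> m < 6 \<Longrightarrow> rep k m = rep k 3"
proof -
  assume "k < 5" "3 \<le> m" "m < 6"
  then have "m = 3 \<or> m = 4 \<or> m = 5" by arith
  then show ?thesis using \<open>k < 5\<close> unfolding lt5 by (auto simp: rep_def)
qed

lemma sorted6:
  fixes y0 y1 y2 y3 y4 y5 :: nat
  assumes "y5 \<le> y4" "y4 \<le> y3" "y3 \<le> y2" "y2 \<le> y1" "y1 \<le> y0" "y0+y1+y2+y3+y4+y5 = 4"
  shows "[y0,y1,y2,y3,y4,y5] \<in> {[4,0,0,0,0,0],[3,1,0,0,0,0],[2,2,0,0,0,0],[2,1,1,0,0,0],[1,1,1,1,0,0]}"
proof -
  have "y0 \<le> 4" using assms by arith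
  then have "y0 = 0 \<or> y0 = 1 \<or> y0 = 2 \<or> y0 = 3 \<or> y0 = 4" by arith
  then show ?thesis using assms by (elim disjE) (simp; arith)+
qed

lemma classify:
  assumes "\<alpha> \<in> quartic_exps"
  shows "\<exists>k<5. \<exists>\<tau>. \<tau> permutes {..<6} \<and> \<alpha> = rep k \<circ> \<tau>"
proof -
  from assms have z: "\<forall>i\<ge>6. \<alpha> i = 0" and s: "(\<Sum>i<6. \<alpha> i) = 4" by (auto simp: quartic_exps_def)
  define xs where "xs = map \<alpha> [0..<6]"
  define ys where "ys = rev (sort xs)"
  have m: "mset xs = mset ys" by (simp add: ys_def)
  have lx: "length xs = 6" by (simp add: xs_def)
  have ly: "length ys = 6" by (simp add: ys_def xs_def)
  obtain f where f: "bij_betw f {..<length xs} {..<length ys}" "\<forall>i<length xs. xs ! i = ys ! (f i)"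
    using permutation_Ex_bij[OF m] by blast
  have sy: "sorted (rev ys)" by (simp add: ys_def)
  have "sum_list ys = sum_list xs" using m by (metis sum_mset_sum_list)
  also have "\<dots> = (\<Sum>i<6. \<alpha> i)" by (simp add: xs_def sum_list_sum_nth lessThan_atLeast0)
  finally have sl: "sum_list ys = 4" using s by simp
  have ys6: "ys = [ys!0, ys!1, ys!2, ys!3, ys!4, ys!5]"
    by (rule nth_equalityI) (auto simp: ly lt6)
  have "[ys!0, ys!1, ys!2, ys!3, ys!4, ys!5] \<in> {[4,0,0,0,0,0],[3,1,0,0,0,0],[2,2,0,0,0,0],[2,1,1,0,0,0],[1,1,1,1,0,0]}"
  proof (rule sorted6)
    show "ys!5 \<le> ys!4" "ys!4 \<le> ys!3" "ys!3 \<le> ys!2" "ys!2 \<le> ys!1" "ys!1 \<le> ys!0"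
      using sy by (subst (asm) ys6; simp)+
    show "ys!0 + ys!1 + ys!2 + ys!3 + ys!4 + ys!5 = 4" using sl by (subst (asm) ys6) simp
  qed
  then have ycases: "ys \<in> {[4,0,0,0,0,0],[3,1,0,0,0,0],[2,2,0,0,0,0],[2,1,1,0,0,0],[1,1,1,1,0,0]}"
    using ys6 by metis
  define \<tau> where "\<tau> = (\<lambda>i. if i < 6 then f i else i)"
  have bt: "bij_betw \<tau> {..<6} {..<6}"
    using f(1) lx ly by (auto simp: \<tau>_def intro: bij_betw_cong[THEN iffD1])
  have tp: "\<tau> permutes {..<6}"
    by (rule bij_imp_permutes[OF bt]) (simp add: \<tau>_def)
  have fi: "i < 6 \<Longrightarrow> \<alpha> i = ys ! (\<tau> i)" for i
    using f(2) lx by (auto simp: \<tau>_def xs_def)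
  have t6: "i < 6 \<Longrightarrow> \<tau> i < 6" for i using permutes_in_image[OF tp] by auto
  show ?thesis
  proof (cases "ys = [1,1,1,1,0,0]")
    case False
    obtain k where k: "k < 4" "ys = [[4,0,0,0,0,0],[3,1,0,0,0,0],[2,2,0,0,0,0],[2,1,1,0,0,0::nat]] ! k"
    proof -
      from ycases False have "ys = [4,0,0,0,0,0] \<or> ys = [3,1,0,0,0,0] \<or> ys = [2,2,0,0,0,0] \<or> ys = [2,1,1,0,0,0]" by simp
      then show thesis
      proof (elim disjE)
        assume "ys = [4,0,0,0,0,0]" then show thesis by (intro that[of 0]) simp_all
      next
        assume "ys = [3,1,0,0,0,0]" then show thesis by (intro that[of 1]) simp_all
      next
        assume "ys = [2,2,0,0,0,0]" then show thesis by (intro that[of 2]) simp_all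
      next
        assume "ys = [2,1,1,0,0,0]" then show thesis by (intro that[of 3]) simp_all
      qed
    qed
    have "\<alpha> = rep k \<circ> \<tau>"
    proof
      fix i show "\<alpha> i = (rep k \<circ> \<tau>) i"
      proof (cases "i < 6")
        case True
        have "\<tau> i = 0 \<or> \<tau> i = 1 \<or> \<tau> i = 2 \<or> \<tau> i = 3 \<or> \<tau> i = 4 \<or> \<tau> i = 5" using t6[OF True] by arith
        moreover have "k = 0 \<or> k = 1 \<or> k = 2 \<or> k = 3" using k(1) by arith
        ultimately show ?thesis using fi[OF True] k(2) by (auto simp: rep_def)
      next
        case False then show ?thesis using z by (simp add: \<tau>_def rep_def)
      qed
    qed
    then show ?thesis using k tp by (intro exI[of _ k]) auto
  next
    case True
    note y4 = True
    define \<sigma> where "\<sigma> = (\<lambda>m::nat. if m = 0 then 4 else if m = 1 then 5 else if m = 4 then 0 else if m = 5 then 1 else m)"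
    have sp: "\<sigma> permutes {..<6}"
    proof (rule bij_imp_permutes)
      show "bij_betw \<sigma> {..<6} {..<6}"
        by (rule bij_betwI[where g=\<sigma>]) (auto simp: \<sigma>_def lt6)
    qed (auto simp: \<sigma>_def)
    have "\<alpha> = rep 4 \<circ> (\<sigma> \<circ> \<tau>)"
    proof
      fix i show "\<alpha> i = (rep 4 \<circ> (\<sigma> \<circ> \<tau>)) i"
      proof (cases "i < 6")
        case True
        have "\<tau> i = 0 \<or> \<tau> i = 1 \<or> \<tau> i = 2 \<or> \<tau> i = 3 \<or> \<tau> i = 4 \<or> \<tau> i = 5" using t6[OF True] by arith
        then show ?thesis using fi[OF True] True y4 by (auto simp: rep_def \<sigma>_def)
      next
        case False then show ?thesis using z by (simp add: \<tau>_def rep_def \<sigma>_def)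
      qed
    qed
    then show ?thesis using permutes_compose[OF tp sp] by (intro exI[of _ 4]) auto
  qed
qed


definition p4 :: "(nat \<Rightarrow> complex) \<Rightarrow> complex" where "p4 x = (\<Sum>i<6. x i ^ 4)"
definition p2 :: "(nat \<Rightarrow> complex) \<Rightarrow> complex" where "p2 x = (\<Sum>i<6. x i ^ 2)"

definition phi :: "nat \<Rightarrow> (nat \<Rightarrow> complex) \<Rightarrow> nat \<times> nat \<times> nat \<Rightarrow> complex" where
  "phi k x t = (case t of (i,j,l) \<Rightarrow> if k = 4 then (\<Prod>m<6. if m = i \<or> m = j then 1 else x m)
      else x i ^ rep k 0 * x j ^ rep k 1 * x l ^ rep k 2)"

lemma mon_rep:
  assumes "k < 5" "g permutes {..<6}"
  shows "mon (rep k) (x \<circ> g) = phi k x (T3 g)"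
proof -
  have i: "inj g" using permutes_inj[OF assms(2)] .
  have "k = 0 \<or> k = 1 \<or> k = 2 \<or> k = 3 \<or> k = 4" using assms(1) by arith
  moreover have "(\<Prod>m<6. if m = g 0 \<or> m = g 1 then 1 else x m) = x (g 2) * x (g 3) * x (g 4) * x (g 5)"
  proof -
    have "(\<Prod>m<6. if m = g 0 \<or> m = g 1 then 1 else x m)
        = (\<Prod>n<6. if g n = g 0 \<or> g n = g 1 then 1 else x (g n))"
      using prod.permute[OF assms(2), of "\<lambda>m. if m = g 0 \<or> m = g 1 then 1 else x m"] by (simp add: o_def)
    also have "\<dots> = (\<Prod>n<6. if n = 0 \<or> n = 1 then 1 else x (g n))" by (simp add: inj_eq[OF i])
    also have "\<dots> = x (g 2) * x (g 3) * x (g 4) * x (g 5)" by (simp add: six)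
    finally show ?thesis .
  qed
  ultimately show ?thesis
    by (auto simp: mon_def phi_def T3_def rep_def six)
qed

lemma sum_Triples: "(\<Sum>t\<in>Triples. f t) =
   (\<Sum>i<6. \<Sum>j<6. \<Sum>l<6. if i \<noteq> j \<and> i \<noteq> l \<and> j \<noteq> l then f (i,j,l) else 0)"
proof -
  have "(\<Sum>i<6. \<Sum>j<6. \<Sum>l<6. if i \<noteq> j \<and> i \<noteq> l \<and> j \<noteq> l then f (i,j,l) else 0)
      = (\<Sum>(i,j,l)\<in>{..<6::nat} \<times> {..<6::nat} \<times> {..<6::nat}. if i \<noteq> j \<and> i \<noteq> l \<and> j \<noteq> l then f (i,j,l) else 0)"
    by (simp add: sum.cartesian_product)
  also have "\<dots> = (\<Sum>t\<in>{..<6::nat} \<times> {..<6::nat} \<times> {..<6::nat}. if (case t of (i,j,l) \<Rightarrow> i \<noteq> j \<and> i \<noteq> l \<and> j \<noteq> l) then f t else 0)"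
    by (rule sum.cong) auto
  also have "\<dots> = (\<Sum>t\<in>{t\<in>{..<6::nat} \<times> {..<6::nat} \<times> {..<6::nat}. case t of (i,j,l) \<Rightarrow> i \<noteq> j \<and> i \<noteq> l \<and> j \<noteq> l}. f t)"
    by (rule sum.inter_filter[symmetric]) auto
  also have "{t\<in>{..<6::nat} \<times> {..<6::nat} \<times> {..<6::nat}. case t of (i,j,l) \<Rightarrow> i \<noteq> j \<and> i \<noteq> l \<and> j \<noteq> l} = Triples"
    unfolding Triples_def by auto
  finally show ?thesis by simp
qed

lemma sum_Triples_explicit: "(\<Sum>t\<in>Triples. f t) = f (0,1,2) + f (0,1,3) + f (0,1,4) + f (0,1,5) + f (0,2,1) + f (0,2,3) + f (0,2,4) + f (0,2,5) + f (0,3,1) + f (0,3,2) + f (0,3,4) + f (0,3,5) + f (0,4,1) + f (0,4,2) + f (0,4,3) + f (0,4,5) + f (0,5,1) + f (0,5,2) + f (0,5,3) + f (0,5,4) + f (1,0,2) + f (1,0,3) + f (1,0,4) + f (1,0,5) + f (1,2,0) + f (1,2,3) + f (1,2,4) + f (1,2,5) + f (1,3,0) + f (1,3,2) + f (1,3,4) + f (1,3,5) + f (1,4,0) + f (1,4,2) + f (1,4,3) + f (1,4,5) + f (1,5,0) + f (1,5,2) + f (1,5,3) + f (1,5,4) + f (2,0,1) + f (2,0,3) + f (2,0,4) + f (2,0,5) + f (2,1,0) + f (2,1,3) + f (2,1,4) + f (2,1,5) + f (2,3,0) + f (2,3,1) + f (2,3,4) + f (2,3,5) + f (2,4,0) +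 f (2,4,1) + f (2,4,3) + f (2,4,5) + f (2,5,0) + f (2,5,1) + f (2,5,3) + f (2,5,4) + f (3,0,1) + f (3,0,2) + f (3,0,4) + f (3,0,5) + f (3,1,0) + f (3,1,2) + f (3,1,4) + f (3,1,5) + f (3,2,0) + f (3,2,1) + f (3,2,4) + f (3,2,5) + f (3,4,0) + f (3,4,1) + f (3,4,2) + f (3,4,5) + f (3,5,0) + f (3,5,1) + f (3,5,2) + f (3,5,4) + f (4,0,1) + f (4,0,2) + f (4,0,3) + f (4,0,5) + f (4,1,0) + f (4,1,2) + f (4,1,3) + f (4,1,5) + f (4,2,0) + f (4,2,1) + f (4,2,3) + f (4,2,5) + f (4,3,0) + f (4,3,1) + f (4,3,2) + f (4,3,5) + f (4,5,0) + f (4,5,1) + f (4,5,2) + f (4,5,3) + f (5,0,1) + f (5,0,2) + f (5,0,3) + f (5,0,4) + f (5,1,0) + f (5,1,2) + f (5,1,3) + f (5,1,4) + f (5,2,0) + f (5,2,1) + f (5,2,3) + f (5,2,4) + f (5,3,0) + f (5,3,1) + f (5,3,2) + f (5,3,4) + f (5,4,0) + f (5,4,1) + f (5,4,2) + f (5,4,3)"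
  unfolding sum_Triples six by (simp add: add.assoc)

context core
begin

definition coef :: "(nat \<Rightarrow> nat) \<Rightarrow> complex" where
  "coef = (SOME a. \<forall>x. F x = (\<Sum>\<alpha>\<in>quartic_exps. a \<alpha> * (\<Prod>i<6. x i ^ \<alpha> i)))"

lemma F_exp: "F x = (\<Sum>\<alpha>\<in>quartic_exps. coef \<alpha> * mon \<alpha> x)"
proof -
  have "\<exists>a. \<forall>x. F x = (\<Sum>\<alpha>\<in>quartic_exps. a \<alpha> * (\<Prod>i<6. x i ^ \<alpha> i))"
    using qf unfolding quartic_form_def .
  from someI_ex[OF this] show ?thesis unfolding coef_def[symmetric] mon_def by blast
qed

definition R :: "(nat \<Rightarrow> nat) \<Rightarrow> (nat \<Rightarrow> complex) \<Rightarrow> complex" where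
  "R \<alpha> x = (\<Sum>g\<in>G. chi g * mon \<alpha> (x \<circ> g))"

lemma G_wrd: "g \<in> G \<Longrightarrow> \<exists>p. g = wrd p"
proof -
  assume g: "g \<in> G"
  then have "T3 g \<in> Triples" by (rule T3_G)
  then obtain i j l where t: "T3 g = (i,j,l)" "i < 6" "j < 6" "l < 6" "i \<noteq> j" "i \<noteq> l" "j \<noteq> l"
    unfolding Triples_def by auto
  then obtain p where "wrd p 0 = i \<and> wrd p 1 = j \<and> wrd p 2 = l" using surj0 by blast
  then have "T3 (wrd p) = T3 g" using t by (simp add: T3_def)
  then have "wrd p = g" using inj_onD[OF T3_inj _ wrd_G g] by blast
  then show ?thesis by blast
qed

lemma chi_sq: "g \<in> G \<Longrightarrow> chi g * chi g = 1"
proof -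
  assume "g \<in> G"
  then obtain t i j k where "g = wrd (t,i,j,k)" using G_wrd by (metis prod_cases4)
  then have "chi g = \<epsilon> ^ j" by (simp add: chi_wrd)
  then have "chi g * chi g = (\<epsilon> * \<epsilon>) ^ j" by (simp add: power_mult_distrib)
  then show ?thesis using eps2 by simp
qed

lemma reynolds: "x \<in> hyperplane \<Longrightarrow> F x = (1/120) * (\<Sum>\<alpha>\<in>quartic_exps. coef \<alpha> * R \<alpha> x)"
proof -
  assume x: "x \<in> hyperplane"
  have "(\<Sum>g\<in>G. chi g * F (x \<circ> g)) = (\<Sum>g\<in>G. F x)"
  proof (rule sum.cong)
    fix g assume g: "g \<in> G"
    show "chi g * F (x \<circ> g) = F x" using inv_chi[OF g x] chi_sq[OF g] by (simp add: mult.assoc[symmetric])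
  qed simp
  also have "\<dots> = 120 * F x" using cardG by simp
  finally have 1: "(\<Sum>g\<in>G. chi g * F (x \<circ> g)) = 120 * F x" .
  have "(\<Sum>g\<in>G. chi g * F (x \<circ> g)) = (\<Sum>g\<in>G. \<Sum>\<alpha>\<in>quartic_exps. coef \<alpha> * (chi g * mon \<alpha> (x \<circ> g)))"
    by (simp add: F_exp sum_distrib_left mult.left_commute)
  also have "\<dots> = (\<Sum>\<alpha>\<in>quartic_exps. coef \<alpha> * R \<alpha> x)"
    by (subst sum.swap) (simp add: R_def sum_distrib_left)
  finally have 2: "(\<Sum>g\<in>G. chi g * F (x \<circ> g)) = (\<Sum>\<alpha>\<in>quartic_exps. coef \<alpha> * R \<alpha> x)" .
  from 1 2 have "120 * F x = (\<Sum>\<alpha>\<in>quartic_exps. coef \<alpha> * R \<alpha> x)" by simp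
  then show ?thesis by (simp add: ac_simps)
qed

lemma mon_shift:
  assumes h: "h permutes {..<6}"
  shows "mon (\<alpha> \<circ> h) (x \<circ> g) = mon \<alpha> (x \<circ> (g \<circ> Hilbert_Choice.inv h))"
proof -
  have "mon \<alpha> (x \<circ> (g \<circ> Hilbert_Choice.inv h)) = (\<Prod>i<6. x (g (Hilbert_Choice.inv h i)) ^ \<alpha> i)"
    by (simp add: mon_def)
  also have "\<dots> = (\<Prod>i<6. x (g (Hilbert_Choice.inv h (h i))) ^ \<alpha> (h i))"
    using prod.permute[OF h, of "\<lambda>i. x (g (Hilbert_Choice.inv h i)) ^ \<alpha> i"] by (simp add: o_def)
  also have "\<dots> = mon (\<alpha> \<circ> h) (x \<circ> g)"
    by (simp add: mon_def permutes_inverses(2)[OF h])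
  finally show ?thesis by simp
qed

lemma R_shift: "h \<in> G \<Longrightarrow> R (\<alpha> \<circ> h) x = chi h * R \<alpha> x"
proof -
  assume h: "h \<in> G"
  have hp: "h permutes {..<6}" using G_perm[OF h] .
  let ?hi = "Hilbert_Choice.inv h"
  have "R (\<alpha> \<circ> h) x = (\<Sum>g\<in>G. chi g * mon \<alpha> (x \<circ> (g \<circ> ?hi)))"
    unfolding R_def by (simp add: mon_shift[OF hp])
  also have "\<dots> = (\<Sum>g\<in>G. chi (g \<circ> h) * mon \<alpha> (x \<circ> g))"
  proof (rule sum.reindex_bij_witness[where j = "\<lambda>g. g \<circ> ?hi" and i = "\<lambda>g. g \<circ> h"])
    fix g assume "g \<in> G"
    show "g \<circ> ?hi \<circ> h = g" using permutes_inv_o(2)[OF hp] by (simp add: o_assoc[symmetric])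
    show "g \<circ> ?hi \<in> G" using \<open>g \<in> G\<close> G_comp G_inv h by blast
    show "g \<circ> h \<circ> ?hi = g" using permutes_inv_o(1)[OF hp] by (simp add: o_assoc[symmetric])
    show "g \<circ> h \<in> G" using \<open>g \<in> G\<close> G_comp h by blast
    show "chi (g \<circ> ?hi \<circ> h) * mon \<alpha> (x \<circ> (g \<circ> ?hi)) = chi g * mon \<alpha> (x \<circ> (g \<circ> ?hi))"
      using permutes_inv_o(2)[OF hp] by (simp add: o_assoc[symmetric])
  qed
  also have "\<dots> = chi h * R \<alpha> x"
    unfolding R_def by (simp add: sum_distrib_left chi_mult h mult.commute mult.left_commute)
  finally show ?thesis .
qed

lemma trans3:
  assumes "i < 6" "j < 6" "l < 6" "i \<noteq> j" "i \<noteq> l" "j \<noteq> l"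
  shows "\<exists>h\<in>G. h i = 0 \<and> h j = 1 \<and> h l = 2"
proof -
  have "(i,j,l) \<in> T3 ` G" using T3_img assms unfolding Triples_def by auto
  then obtain g where g: "g \<in> G" "g 0 = i" "g 1 = j" "g 2 = l" by (auto simp: T3_def)
  have gp: "g permutes {..<6}" using G_perm[OF g(1)] .
  show ?thesis
    by (rule bexI[of _ "Hilbert_Choice.inv g"])
       (use g permutes_inverses(2)[OF gp] G_inv in \<open>auto\<close>)
qed

lemma P_step:
  assumes k: "k < 5" and tp: "\<tau> permutes {..<6}"
  shows "\<exists>h\<in>G. rep k \<circ> \<tau> = rep k \<circ> h"
proof -
  let ?ti = "Hilbert_Choice.inv \<tau>"
  have tip: "?ti permutes {..<6}" using permutes_inv[OF tp] .
  have lt: "?ti 0 < 6" "?ti 1 < 6" "?ti 2 < 6" using permutes_in_image[OF tip] by auto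
  have ne: "?ti 0 \<noteq> ?ti 1" "?ti 0 \<noteq> ?ti 2" "?ti 1 \<noteq> ?ti 2"
    using permutes_inj[OF tip] by (simp_all add: inj_eq)
  obtain h where h: "h \<in> G" "h (?ti 0) = 0" "h (?ti 1) = 1" "h (?ti 2) = 2"
    using trans3[OF lt ne] by blast
  have hp: "h permutes {..<6}" using G_perm[OF h(1)] .
  have "rep k (\<tau> n) = rep k (h n)" for n
  proof (cases "n < 6")
    case False
    then show ?thesis using permutes_not_in[OF tp] permutes_not_in[OF hp] by simp
  next
    case True
    have tn: "\<tau> n < 6" "h n < 6" using permutes_in_image[OF tp] permutes_in_image[OF hp] True by auto
    show ?thesis
    proof (cases "\<tau> n \<in> {0,1,2}")
      case True
      have "h (?ti (\<tau> n)) = \<tau> n" using True h(2-4) by auto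
      moreover have "?ti (\<tau> n) = n" using permutes_inverses(2)[OF tp] by simp
      ultimately have "h n = \<tau> n" by metis
      then show ?thesis by simp
    next
      case False
      have hi: "inj h" using permutes_inj[OF hp] .
      have ti: "\<tau> (?ti m) = m" for m using permutes_inverses(1)[OF tp] by simp
      have "h n \<notin> {0,1,2}"
      proof
        assume "h n \<in> {0,1,2}"
        then have "h n = h (?ti 0) \<or> h n = h (?ti 1) \<or> h n = h (?ti 2)" using h(2-4) by auto
        then have "n = ?ti 0 \<or> n = ?ti 1 \<or> n = ?ti 2" using injD[OF hi] by blast
        then have "\<tau> n \<in> {0,1,2}" using ti by auto
        then show False using False by simp
      qed
      have "3 \<le> \<tau> n" using False by auto
      moreover have "3 \<le> h n" using \<open>h n \<notin> {0,1,2}\<close> by auto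
      ultimately show ?thesis using tn rep_const[OF k] by metis
    qed
  qed
  then show ?thesis using h(1) by (intro bexI[of _ h]) auto
qed

lemma orbit_rep: "\<alpha> \<in> quartic_exps \<Longrightarrow> \<exists>k<5. \<exists>h\<in>G. \<alpha> = rep k \<circ> h"
proof -
  assume "\<alpha> \<in> quartic_exps"
  then obtain k \<tau> where k: "k < 5" "\<tau> permutes {..<6}" "\<alpha> = rep k \<circ> \<tau>" using classify by blast
  then obtain h where "h \<in> G" "rep k \<circ> \<tau> = rep k \<circ> h" using P_step by blast
  then show ?thesis using k by auto
qed

lemma R_rep_triples: "k < 5 \<Longrightarrow> R (rep k) x = (\<Sum>t\<in>Triples. C t * phi k x t)"
proof -
  assume k: "k < 5"
  have "R (rep k) x = (\<Sum>g\<in>G. C (T3 g) * phi k x (T3 g))"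
    unfolding R_def
  proof (rule sum.cong)
    fix g assume g: "g \<in> G"
    have "C (T3 g) = chi g" unfolding C_def Tinv_def using inv_into_f_f[OF T3_inj g] by simp
    then show "chi g * mon (rep k) (x \<circ> g) = C (T3 g) * phi k x (T3 g)"
      using mon_rep[OF k G_perm[OF g]] by simp
  qed simp
  also have "\<dots> = (\<Sum>t\<in>T3 ` G. C t * phi k x t)"
    by (rule sum.reindex[OF T3_inj, symmetric, unfolded o_def])
  finally show ?thesis using T3_img by simp
qed


definition uk :: "nat \<Rightarrow> complex" where "uk k = [20, -4, -4, 2, -2] ! k"
definition vk :: "nat \<Rightarrow> complex" where "vk k = [0, 0, 4, -1, 1] ! k"

lemma comp_triv_0: "\<epsilon> = 1 \<Longrightarrow> x \<in> hyperplane \<Longrightarrow> R (rep 0) x = uk 0 * p4 x + vk 0 * p2 x ^ 2"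
proof -
  assume e: "\<epsilon> = 1" and x: "x \<in> hyperplane"
  have "x 0 + x 1 + x 2 + x 3 + x 4 + x 5 = 0" using x unfolding hyperplane_def by (simp add: six add.assoc)
  then have x5: "x 5 = -(x 0 + x 1 + x 2 + x 3 + x 4)" by algebra
  have r: "R (rep 0) x = (\<Sum>t\<in>Triples. C t * phi 0 x t)" by (rule R_rep_triples) simp
  show ?thesis unfolding r sum_Triples_explicit
    apply (simp only: C_facts e)
    by (simp add: phi_def rep_def p4_def p2_def six x5 uk_def vk_def; algebra)
qed

lemma comp_tw_0: "\<epsilon> = -1 \<Longrightarrow> x \<in> hyperplane \<Longrightarrow> R (rep 0) x = 0"
proof -
  assume e: "\<epsilon> = -1" and x: "x \<in> hyperplane"
  have "x 0 + x 1 + x 2 + x 3 + x 4 + x 5 = 0" using x unfolding hyperplane_def by (simp add: six add.assoc)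
  then have x5: "x 5 = -(x 0 + x 1 + x 2 + x 3 + x 4)" by algebra
  have r: "R (rep 0) x = (\<Sum>t\<in>Triples. C t * phi 0 x t)" by (rule R_rep_triples) simp
  show ?thesis unfolding r sum_Triples_explicit
    apply (simp only: C_facts e)
    by (simp add: phi_def rep_def six x5; algebra)
qed

lemma comp_triv_1: "\<epsilon> = 1 \<Longrightarrow> x \<in> hyperplane \<Longrightarrow> R (rep 1) x = uk 1 * p4 x + vk 1 * p2 x ^ 2"
proof -
  assume e: "\<epsilon> = 1" and x: "x \<in> hyperplane"
  have "x 0 + x 1 + x 2 + x 3 + x 4 + x 5 = 0" using x unfolding hyperplane_def by (simp add: six add.assoc)
  then have x5: "x 5 = -(x 0 + x 1 + x 2 + x 3 + x 4)" by algebra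
  have r: "R (rep 1) x = (\<Sum>t\<in>Triples. C t * phi 1 x t)" by (rule R_rep_triples) simp
  show ?thesis unfolding r sum_Triples_explicit
    apply (simp only: C_facts e)
    by (simp add: phi_def rep_def p4_def p2_def six x5 uk_def vk_def; algebra)
qed

lemma comp_tw_1: "\<epsilon> = -1 \<Longrightarrow> x \<in> hyperplane \<Longrightarrow> R (rep 1) x = 0"
proof -
  assume e: "\<epsilon> = -1" and x: "x \<in> hyperplane"
  have "x 0 + x 1 + x 2 + x 3 + x 4 + x 5 = 0" using x unfolding hyperplane_def by (simp add: six add.assoc)
  then have x5: "x 5 = -(x 0 + x 1 + x 2 + x 3 + x 4)" by algebra
  have r: "R (rep 1) x = (\<Sum>t\<in>Triples. C t * phi 1 x t)" by (rule R_rep_triples) simp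
  show ?thesis unfolding r sum_Triples_explicit
    apply (simp only: C_facts e)
    by (simp add: phi_def rep_def six x5; algebra)
qed

lemma comp_triv_2: "\<epsilon> = 1 \<Longrightarrow> x \<in> hyperplane \<Longrightarrow> R (rep 2) x = uk 2 * p4 x + vk 2 * p2 x ^ 2"
proof -
  assume e: "\<epsilon> = 1" and x: "x \<in> hyperplane"
  have "x 0 + x 1 + x 2 + x 3 + x 4 + x 5 = 0" using x unfolding hyperplane_def by (simp add: six add.assoc)
  then have x5: "x 5 = -(x 0 + x 1 + x 2 + x 3 + x 4)" by algebra
  have r: "R (rep 2) x = (\<Sum>t\<in>Triples. C t * phi 2 x t)" by (rule R_rep_triples) simp
  show ?thesis unfolding r sum_Triples_explicit
    apply (simp only: C_facts e)
    by (simp add: phi_def rep_def p4_def p2_def six x5 uk_def vk_def; algebra)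
qed

lemma comp_tw_2: "\<epsilon> = -1 \<Longrightarrow> x \<in> hyperplane \<Longrightarrow> R (rep 2) x = 0"
proof -
  assume e: "\<epsilon> = -1" and x: "x \<in> hyperplane"
  have "x 0 + x 1 + x 2 + x 3 + x 4 + x 5 = 0" using x unfolding hyperplane_def by (simp add: six add.assoc)
  then have x5: "x 5 = -(x 0 + x 1 + x 2 + x 3 + x 4)" by algebra
  have r: "R (rep 2) x = (\<Sum>t\<in>Triples. C t * phi 2 x t)" by (rule R_rep_triples) simp
  show ?thesis unfolding r sum_Triples_explicit
    apply (simp only: C_facts e)
    by (simp add: phi_def rep_def six x5; algebra)
qed

lemma comp_triv_3: "\<epsilon> = 1 \<Longrightarrow> x \<in> hyperplane \<Longrightarrow> R (rep 3) x = uk 3 * p4 x + vk 3 * p2 x ^ 2"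
proof -
  assume e: "\<epsilon> = 1" and x: "x \<in> hyperplane"
  have "x 0 + x 1 + x 2 + x 3 + x 4 + x 5 = 0" using x unfolding hyperplane_def by (simp add: six add.assoc)
  then have x5: "x 5 = -(x 0 + x 1 + x 2 + x 3 + x 4)" by algebra
  have r: "R (rep 3) x = (\<Sum>t\<in>Triples. C t * phi 3 x t)" by (rule R_rep_triples) simp
  show ?thesis unfolding r sum_Triples_explicit
    apply (simp only: C_facts e)
    by (simp add: phi_def rep_def p4_def p2_def six x5 uk_def vk_def; algebra)
qed

lemma comp_tw_3: "\<epsilon> = -1 \<Longrightarrow> x \<in> hyperplane \<Longrightarrow> R (rep 3) x = 0"
proof -
  assume e: "\<epsilon> = -1" and x: "x \<in> hyperplane"
  have "x 0 + x 1 + x 2 + x 3 + x 4 + x 5 = 0" using x unfolding hyperplane_def by (simp add: six add.assoc)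
  then have x5: "x 5 = -(x 0 + x 1 + x 2 + x 3 + x 4)" by algebra
  have r: "R (rep 3) x = (\<Sum>t\<in>Triples. C t * phi 3 x t)" by (rule R_rep_triples) simp
  show ?thesis unfolding r sum_Triples_explicit
    apply (simp only: C_facts e)
    by (simp add: phi_def rep_def six x5; algebra)
qed

lemma comp_triv_4: "\<epsilon> = 1 \<Longrightarrow> x \<in> hyperplane \<Longrightarrow> R (rep 4) x = uk 4 * p4 x + vk 4 * p2 x ^ 2"
proof -
  assume e: "\<epsilon> = 1" and x: "x \<in> hyperplane"
  have "x 0 + x 1 + x 2 + x 3 + x 4 + x 5 = 0" using x unfolding hyperplane_def by (simp add: six add.assoc)
  then have x5: "x 5 = -(x 0 + x 1 + x 2 + x 3 + x 4)" by algebra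
  have r: "R (rep 4) x = (\<Sum>t\<in>Triples. C t * phi 4 x t)" by (rule R_rep_triples) simp
  show ?thesis unfolding r sum_Triples_explicit
    apply (simp only: C_facts e)
    by (simp add: phi_def rep_def p4_def p2_def six x5 uk_def vk_def; algebra)
qed

lemma comp_tw_4: "\<epsilon> = -1 \<Longrightarrow> x \<in> hyperplane \<Longrightarrow> R (rep 4) x = 0"
proof -
  assume e: "\<epsilon> = -1" and x: "x \<in> hyperplane"
  have "x 0 + x 1 + x 2 + x 3 + x 4 + x 5 = 0" using x unfolding hyperplane_def by (simp add: six add.assoc)
  then have x5: "x 5 = -(x 0 + x 1 + x 2 + x 3 + x 4)" by algebra
  have r: "R (rep 4) x = (\<Sum>t\<in>Triples. C t * phi 4 x t)" by (rule R_rep_triples) simp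
  show ?thesis unfolding r sum_Triples_explicit
    apply (simp only: C_facts e)
    by (simp add: phi_def rep_def six x5; algebra)
qed

lemma comp_triv: "k < 5 \<Longrightarrow> \<epsilon> = 1 \<Longrightarrow> x \<in> hyperplane \<Longrightarrow> R (rep k) x = uk k * p4 x + vk k * p2 x ^ 2"
  using comp_triv_0 comp_triv_1 comp_triv_2 comp_triv_3 comp_triv_4 unfolding lt5 by auto

lemma comp_tw: "k < 5 \<Longrightarrow> \<epsilon> = -1 \<Longrightarrow> x \<in> hyperplane \<Longrightarrow> R (rep k) x = 0"
  using comp_tw_0 comp_tw_1 comp_tw_2 comp_tw_3 comp_tw_4 unfolding lt5 by auto

definition kh :: "(nat \<Rightarrow> nat) \<Rightarrow> nat \<times> (nat \<Rightarrow> nat)" where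
  "kh \<alpha> = (SOME p. fst p < 5 \<and> snd p \<in> G \<and> \<alpha> = rep (fst p) \<circ> snd p)"

lemma kh: "\<alpha> \<in> quartic_exps \<Longrightarrow> fst (kh \<alpha>) < 5 \<and> snd (kh \<alpha>) \<in> G \<and> \<alpha> = rep (fst (kh \<alpha>)) \<circ> snd (kh \<alpha>)"
proof -
  assume "\<alpha> \<in> quartic_exps"
  then obtain k h where "k < 5" "h \<in> G" "\<alpha> = rep k \<circ> h" using orbit_rep by blast
  then have "\<exists>p. fst p < 5 \<and> snd p \<in> G \<and> \<alpha> = rep (fst p) \<circ> snd p" by (intro exI[of _ "(k,h)"]) simp
  from someI_ex[OF this] show ?thesis unfolding kh_def .
qed

lemma R_kh: "\<alpha> \<in> quartic_exps \<Longrightarrow> R \<alpha> x = chi (snd (kh \<alpha>)) * R (rep (fst (kh \<alpha>))) x"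
proof -
  assume a: "\<alpha> \<in> quartic_exps"
  have "R \<alpha> x = R (rep (fst (kh \<alpha>)) \<circ> snd (kh \<alpha>)) x" using kh[OF a] by metis
  also have "\<dots> = chi (snd (kh \<alpha>)) * R (rep (fst (kh \<alpha>))) x" using R_shift kh[OF a] by blast
  finally show ?thesis .
qed

lemma eps_one: "\<epsilon> = 1"
proof (rule ccontr)
  assume "\<epsilon> \<noteq> 1"
  then have e: "\<epsilon> = -1" using eps_cases by auto
  have "F x = 0" if x: "x \<in> hyperplane" for x
  proof -
    have "F x = (1/120) * (\<Sum>\<alpha>\<in>quartic_exps. coef \<alpha> * R \<alpha> x)" using reynolds[OF x] .
    also have "(\<Sum>\<alpha>\<in>quartic_exps. coef \<alpha> * R \<alpha> x) = 0"
    proof (rule sum.neutral, rule ballI)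
      fix \<alpha> assume a: "\<alpha> \<in> quartic_exps"
      show "coef \<alpha> * R \<alpha> x = 0" using R_kh[OF a] comp_tw[OF _ e x] kh[OF a] by simp
    qed
    finally show ?thesis by simp
  qed
  then show False using nz by auto
qed

lemma core_main: "\<exists>c. c \<noteq> 0 \<and> (\<forall>x\<in>hyperplane. F x = c * Xt_eq (1/6) x)"
proof -
  define U where "U = (1/120) * (\<Sum>\<alpha>\<in>quartic_exps. coef \<alpha> * chi (snd (kh \<alpha>)) * uk (fst (kh \<alpha>)))"
  define V where "V = (1/120) * (\<Sum>\<alpha>\<in>quartic_exps. coef \<alpha> * chi (snd (kh \<alpha>)) * vk (fst (kh \<alpha>)))"
  have FUV: "F x = U * p4 x + V * p2 x ^ 2" if x: "x \<in> hyperplane" for x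
  proof -
    have "F x = (1/120) * (\<Sum>\<alpha>\<in>quartic_exps. coef \<alpha> * R \<alpha> x)" using reynolds[OF x] .
    also have "(\<Sum>\<alpha>\<in>quartic_exps. coef \<alpha> * R \<alpha> x)
       = (\<Sum>\<alpha>\<in>quartic_exps. (coef \<alpha> * chi (snd (kh \<alpha>)) * uk (fst (kh \<alpha>))) * p4 x
             + (coef \<alpha> * chi (snd (kh \<alpha>)) * vk (fst (kh \<alpha>))) * p2 x ^ 2)"
    proof (rule sum.cong)
      fix \<alpha> assume a: "\<alpha> \<in> quartic_exps"
      show "coef \<alpha> * R \<alpha> x = (coef \<alpha> * chi (snd (kh \<alpha>)) * uk (fst (kh \<alpha>))) * p4 x
             + (coef \<alpha> * chi (snd (kh \<alpha>)) * vk (fst (kh \<alpha>))) * p2 x ^ 2"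
        using R_kh[OF a] comp_triv[OF _ eps_one x] kh[OF a] by (simp add: algebra_simps)
    qed simp
    also have "\<dots> = (\<Sum>\<alpha>\<in>quartic_exps. coef \<alpha> * chi (snd (kh \<alpha>)) * uk (fst (kh \<alpha>))) * p4 x
        + (\<Sum>\<alpha>\<in>quartic_exps. coef \<alpha> * chi (snd (kh \<alpha>)) * vk (fst (kh \<alpha>))) * p2 x ^ 2"
      by (simp add: sum.distrib sum_distrib_right)
    finally show ?thesis unfolding U_def V_def by (simp add: field_simps)
  qed
  have q0h: "q0 \<in> hyperplane" unfolding hyperplane_def by (simp add: six q0_def)
  have "F q0 = U * 6 + V * 36" using FUV[OF q0h] by (simp add: p4_def p2_def six q0_def)
  then have V: "V = - U / 6" using zq by (simp add: field_simps) algebra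
  have FX: "F x = U * Xt_eq (1/6) x" if "x \<in> hyperplane" for x
    using FUV[OF that] V by (simp add: Xt_eq_def p4_def p2_def algebra_simps)
  have "U \<noteq> 0"
  proof
    assume "U = 0"
    then have "\<forall>x\<in>hyperplane. F x = 0" using FX by simp
    then show False using nz by auto
  qed
  then show ?thesis using FX by blast
qed

end


definition rb :: "nat \<Rightarrow> nat" where
  "rb n = (if n = 1 then 2 else if n = 2 then 1 else if n = 3 then 4 else if n = 4 then 3 else n)"

lemma perm_by_inv:
  assumes "\<And>n. q (p n) = n" "\<And>n. p (q n) = n" "\<And>n. n \<notin> S \<Longrightarrow> p n = n"
  shows "p permutes S"
  unfolding permutes_def
proof (intro conjI allI impI)
  fix y show "\<exists>!x. p x = y"
  proof (rule ex1I[of _ "q y"])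
    show "p (q y) = y" by (rule assms(2))
    fix x assume "p x = y" then show "x = q y" using assms(1) by auto
  qed
qed (use assms(3) in auto)

lemma a0_perm5: "a0 permutes {..<5}"
  by (rule perm_by_inv[where q = "a0 ^^ 4"]) (auto simp: a0_pow a0_def lt5)

lemma b0_perm5: "b0 permutes {..<5}"
  by (rule perm_by_inv[where q = "\<lambda>n. b0 (b0 (b0 n))"]) (auto simp: b0_4, auto simp: b0_def)

lemma rb_perm5: "rb permutes {..<5}"
  by (rule perm_by_inv[where q = rb]) (auto simp: rb_def)

lemma rg_perm6: "rg permutes {..<6}"
  by (rule perm_by_inv[where q = rg]) (auto simp: rg_def)

lemma perm56: "p permutes {..<5} \<Longrightarrow> p permutes {..<6::nat}"
  by (erule permutes_subset) auto

definition cj :: "(nat \<Rightarrow> nat) \<Rightarrow> (nat \<Rightarrow> nat) \<Rightarrow> nat \<Rightarrow> nat" where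
  "cj \<sigma> g = \<sigma> \<circ> g \<circ> Hilbert_Choice.inv \<sigma>"

lemma cj_comp: "\<sigma> permutes S \<Longrightarrow> cj \<sigma> (g \<circ> h) = cj \<sigma> g \<circ> cj \<sigma> h"
  by (simp add: cj_def fun_eq_iff permutes_inverses)

lemma cj_id: "\<sigma> permutes S \<Longrightarrow> cj \<sigma> id = id"
  by (simp add: cj_def fun_eq_iff permutes_inverses)

lemma cj_back: "\<sigma> permutes S \<Longrightarrow> Hilbert_Choice.inv \<sigma> \<circ> cj \<sigma> g \<circ> \<sigma> = g"
  by (simp add: cj_def fun_eq_iff permutes_inverses)

lemma cj_eq: "\<sigma> permutes S \<Longrightarrow> \<sigma> \<circ> g = h \<circ> \<sigma> \<Longrightarrow> cj \<sigma> g = h"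
proof -
  assume s: "\<sigma> permutes S" and e: "\<sigma> \<circ> g = h \<circ> \<sigma>"
  have "\<sigma> (g y) = h (\<sigma> y)" for y using e by (metis comp_apply)
  then show ?thesis by (simp add: cj_def fun_eq_iff permutes_inverses[OF s])
qed

lemma cj_cj: "\<sigma> permutes S \<Longrightarrow> \<tau> permutes S \<Longrightarrow> cj \<tau> (cj \<sigma> g) = cj (\<tau> \<circ> \<sigma>) g"
proof -
  assume s: "\<sigma> permutes S" and t: "\<tau> permutes S"
  have "Hilbert_Choice.inv (\<tau> \<circ> \<sigma>) = Hilbert_Choice.inv \<sigma> \<circ> Hilbert_Choice.inv \<tau>"
    using o_inv_distrib[OF permutes_bij[OF t] permutes_bij[OF s]] .
  then show ?thesis unfolding cj_def by (simp add: o_assoc)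
qed

lemma cj_perm: "\<sigma> permutes S \<Longrightarrow> g permutes S \<Longrightarrow> cj \<sigma> g permutes S"
  unfolding cj_def by (intro permutes_compose permutes_inv) auto

lemma cj_inv: "\<sigma> permutes S \<Longrightarrow> g permutes S \<Longrightarrow> Hilbert_Choice.inv (cj \<sigma> g) = cj \<sigma> (Hilbert_Choice.inv g)"
proof -
  assume s: "\<sigma> permutes S" and g: "g permutes S"
  have "cj \<sigma> g \<circ> cj \<sigma> (Hilbert_Choice.inv g) = id"
    using cj_comp[OF s, of g "Hilbert_Choice.inv g"] permutes_inv_o(1)[OF g] cj_id[OF s] by simp
  moreover have "cj \<sigma> (Hilbert_Choice.inv g) \<circ> cj \<sigma> g = id"
    using cj_comp[OF s, of "Hilbert_Choice.inv g" g] permutes_inv_o(2)[OF g] cj_id[OF s] by simp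
  ultimately show ?thesis by (rule inv_unique_comp)
qed

lemma cj_inj: "\<sigma> permutes S \<Longrightarrow> inj (cj \<sigma>)"
proof (rule injI)
  fix g h assume s: "\<sigma> permutes S" and "cj \<sigma> g = cj \<sigma> h"
  then have "Hilbert_Choice.inv \<sigma> \<circ> cj \<sigma> g \<circ> \<sigma> = Hilbert_Choice.inv \<sigma> \<circ> cj \<sigma> h \<circ> \<sigma>" by simp
  then show "g = h" using cj_back[OF s] by simp
qed


lemma perm_pow: "p permutes S \<Longrightarrow> (p ^^ k) permutes S"
  by (induction k) (auto intro: permutes_compose permutes_id simp: id_def[symmetric])

lemma pow_mod5: "a ^^ 5 = id \<Longrightarrow> a ^^ n = a ^^ (n mod 5)"
proof -
  assume a5: "a ^^ 5 = id"
  have "a ^^ n = a ^^ (5 * (n div 5) + n mod 5)" by simp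
  also have "\<dots> = (a ^^ 5) ^^ (n div 5) \<circ> a ^^ (n mod 5)" by (simp only: funpow_add funpow_mult)
  also have "\<dots> = a ^^ (n mod 5)" using a5 by simp
  finally show ?thesis .
qed


lemma five_cycle:
  assumes ap: "a permutes {..<6}" and a5: "a ^^ 5 = id" and an: "a \<noteq> id"
  shows "\<exists>\<sigma>. \<sigma> permutes {..<6} \<and> \<sigma> \<circ> a = a0 \<circ> \<sigma>"
proof -
  obtain i where ai: "a i \<noteq> i" using an by (auto simp: fun_eq_iff)
  have i6: "i < 6"
  proof (rule ccontr)
    assume "\<not> i < 6"
    then have "a i = i" using permutes_not_in[OF ap] by simp
    then show False using ai by simp
  qed
  have inja: "inj a" using permutes_inj[OF ap] .
  have injp: "inj (a ^^ k)" for k using inj_fn[OF inja] .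
  have pm: "(a ^^ k) i < 6" for k using permutes_in_image[OF perm_pow[OF ap]] i6 by auto
  have fix1: "a y = y" if y: "(a ^^ d) y = y" and d: "0 < d" "d < 5" for y d
  proof -
    have it: "(a ^^ (d * e)) y = y" for e
      by (induction e) (simp_all add: funpow_add y)
    have "d = 1 \<or> d = 2 \<or> d = 3 \<or> d = 4" using d by arith
    then have "(d * d ^ 3) mod 5 = 1" by auto
    then have "a ^^ (d * d ^ 3) = a" using pow_mod5[OF a5, of "d * d ^ 3"] by simp
    then show ?thesis using it[of "d ^ 3"] by simp
  qed
  have dist: "k = l" if "k < 5" "l < 5" "(a ^^ k) i = (a ^^ l) i" for k l
  proof (rule ccontr)
    assume "k \<noteq> l"
    have main: "False" if kl: "k' < l'" "l' < 5" "(a ^^ k') i = (a ^^ l') i" for k' l'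
    proof -
      have "(a ^^ (l' - k')) ((a ^^ k') i) = (a ^^ (l' - k' + k')) i"
        by (simp only: funpow_add o_apply)
      also have "l' - k' + k' = l'" using kl by simp
      finally have "(a ^^ (l' - k')) ((a ^^ k') i) = (a ^^ k') i" using kl(3) by simp
      then have "a ((a ^^ k') i) = (a ^^ k') i" using fix1 kl by simp
      then have "(a ^^ k') (a i) = (a ^^ k') i" by (simp add: funpow_swap1)
      then have "a i = i" using injp by (meson injD)
      then show False using ai by simp
    qed
    have "k < l \<or> l < k" using \<open>k \<noteq> l\<close> by arith
    then show False
    proof
      assume "k < l" then show False using main[of k l] that by simp
    next
      assume "l < k" then show False using main[of l k] that by simp
    qed
  qed
  define Orb where "Orb = (\<lambda>k. (a ^^ k) i) ` {..<5}"
  have injO: "inj_on (\<lambda>k. (a ^^ k) i) {..<5}" using dist by (auto intro: inj_onI)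
  have cO: "card Orb = 5" unfolding Orb_def using card_image[OF injO] by simp
  have O6: "Orb \<subseteq> {..<6}" unfolding Orb_def using pm by auto
  have finO: "finite Orb" unfolding Orb_def by simp
  obtain p where p: "p < 6" "p \<notin> Orb"
  proof -
    have "\<not> {..<6} \<subseteq> Orb"
    proof
      assume "{..<6} \<subseteq> Orb"
      then have "card {..<6::nat} \<le> card Orb" by (rule card_mono[OF finO])
      then show False using cO by simp
    qed
    then obtain q where "q \<in> {..<6}" "q \<notin> Orb" by blast
    then show thesis using that by simp
  qed
  have uniq: "q = p" if "q < 6" "q \<notin> Orb" for q
  proof (rule ccontr)
    assume "q \<noteq> p"
    have "insert q (insert p Orb) \<subseteq> {..<6}" using O6 p that by auto
    then have "card (insert q (insert p Orb)) \<le> card {..<6::nat}" by (rule card_mono[OF finite_lessThan])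
    then have "card (insert q (insert p Orb)) \<le> 6" by simp
    moreover have "card (insert q (insert p Orb)) = 7" using cO finO p that \<open>q \<noteq> p\<close> by simp
    ultimately show False by simp
  qed
  have ap6: "a p < 6" using permutes_in_image[OF ap] p by auto
  have apO: "a p \<notin> Orb"
  proof
    assume "a p \<in> Orb"
    then obtain k where k: "k < 5" "a p = (a ^^ k) i" unfolding Orb_def by auto
    show False
    proof (cases k)
      case 0
      have "(a ^^ 5) i = i" using a5 by simp
      then have "a ((a ^^ 4) i) = i" by (simp add: eval_nat_numeral)
      then have "a p = a ((a ^^ 4) i)" using k 0 by simp
      then have "p = (a ^^ 4) i" using inja by (meson injD)
      then show False using p(2) unfolding Orb_def by auto
    next
      case (Suc k')
      then have "a p = a ((a ^^ k') i)" using k by simp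
      then have "p = (a ^^ k') i" using inja by (meson injD)
      then show False using p(2) Suc k(1) unfolding Orb_def by auto
    qed
  qed
  have app: "a p = p" using uniq[OF ap6 apO] .
  define \<tau> where "\<tau> = (\<lambda>n. if n < 5 then (a ^^ n) i else if n = 5 then p else n)"
  have tinj: "inj_on \<tau> {..<6}"
  proof (rule inj_onI)
    fix x y assume xy: "x \<in> {..<6}" "y \<in> {..<6}" "\<tau> x = \<tau> y"
    have inO: "n < 5 \<Longrightarrow> (a ^^ n) i \<in> Orb" for n unfolding Orb_def by auto
    show "x = y"
    proof (cases "x < 5"; cases "y < 5")
      assume "x < 5" "y < 5" then show ?thesis using xy dist by (simp add: \<tau>_def)
    next
      assume "x < 5" "\<not> y < 5"
      then have "y = 5" using xy by auto
      then show ?thesis using xy \<open>x < 5\<close> inO p(2) by (auto simp: \<tau>_def)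
    next
      assume "\<not> x < 5" "y < 5"
      then have "x = 5" using xy by auto
      then show ?thesis using xy \<open>y < 5\<close> inO p(2) by (auto simp: \<tau>_def)
    next
      assume "\<not> x < 5" "\<not> y < 5"
      then show ?thesis using xy by auto
    qed
  qed
  have timg: "\<tau> ` {..<6} \<subseteq> {..<6}" using pm p by (auto simp: \<tau>_def)
  have tbij: "bij_betw \<tau> {..<6} {..<6}"
    unfolding bij_betw_def using tinj endo_inj_surj[OF _ timg tinj] by simp
  have tp: "\<tau> permutes {..<6}"
    by (rule bij_imp_permutes[OF tbij]) (simp add: \<tau>_def)
  have rel: "a \<circ> \<tau> = \<tau> \<circ> a0"
  proof
    fix n show "(a \<circ> \<tau>) n = (\<tau> \<circ> a0) n"
    proof -
      have "n < 4 \<or> n = 4 \<or> n = 5 \<or> n \<ge> 6" by arith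
      moreover have "a ((a ^^ 4) i) = i"
      proof -
        have "(a ^^ 5) i = i" using a5 by simp
        then show ?thesis by (simp add: eval_nat_numeral)
      qed
      moreover have "n \<ge> 6 \<Longrightarrow> a n = n" using permutes_not_in[OF ap] by simp
      ultimately show ?thesis using app by (auto simp: \<tau>_def a0_def)
    qed
  qed
  define \<sigma> where "\<sigma> = Hilbert_Choice.inv \<tau>"
  have sp: "\<sigma> permutes {..<6}" unfolding \<sigma>_def using permutes_inv[OF tp] .
  have "\<sigma> \<circ> a = a0 \<circ> \<sigma>"
  proof -
    have "\<sigma> \<circ> a = \<sigma> \<circ> a \<circ> \<tau> \<circ> \<sigma>" using permutes_inv_o(1)[OF tp] unfolding \<sigma>_def by (simp add: o_assoc[symmetric])
    also have "\<dots> = \<sigma> \<circ> (a \<circ> \<tau>) \<circ> \<sigma>" by (simp add: o_assoc)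
    also have "\<dots> = \<sigma> \<circ> (\<tau> \<circ> a0) \<circ> \<sigma>" using rel by simp
    also have "\<dots> = \<sigma> \<circ> \<tau> \<circ> a0 \<circ> \<sigma>" by (simp add: o_assoc)
    also have "\<dots> = a0 \<circ> \<sigma>" using permutes_inv_o(2)[OF tp] unfolding \<sigma>_def by simp
    finally show ?thesis .
  qed
  then show ?thesis using sp by blast
qed


lemma a0_perm6: "a0 permutes {..<6}" using perm56[OF a0_perm5] .
lemma b0_perm6: "b0 permutes {..<6}" using perm56[OF b0_perm5] .
lemma rb_perm6: "rb permutes {..<6}" using perm56[OF rb_perm5] .

lemma a0v: "a0 0 = 1" "a0 1 = 2" "a0 2 = 3" "a0 3 = 4" "a0 4 = 0" "a0 5 = 5" "a0 (Suc 0) = 2" by (simp_all add: a0_def)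
lemma b0v: "b0 0 = 0" "b0 1 = 2" "b0 2 = 4" "b0 3 = 1" "b0 4 = 3" "b0 5 = 5" "b0 (Suc 0) = 2" by (simp_all add: b0_def)

lemma injne: "inj f \<Longrightarrow> (x::nat) \<noteq> y \<Longrightarrow> f x \<noteq> f y" by (metis injD)

lemma b_norm:
  assumes bp: "b permutes {..<6}" and rel: "b \<circ> a0 = a0 \<circ> a0 \<circ> b"
  shows "\<exists>m. cj (a0 ^^ m) b = b0"
proof -
  have e: "b (a0 n) = a0 (a0 (b n))" for n using fun_cong[OF rel, of n] by simp
  have ib: "inj b" using permutes_inj[OF bp] .
  have b6: "n < 6 \<Longrightarrow> b n < 6" for n using permutes_in_image[OF bp] by simp
  have bn: "n \<ge> 6 \<Longrightarrow> b n = n" for n using permutes_not_in[OF bp] by simp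
  have b5: "b 5 = 5"
  proof -
    have "b 5 = a0 (a0 (b 5))" using e[of 5] by (simp add: a0_def)
    moreover have "b 5 < 6" using b6 by simp
    ultimately show ?thesis unfolding lt6 by (auto simp: a0_def)
  qed
  have "b 0 \<noteq> 5" using b5 injne[OF ib, of 0 5] by simp
  then have v: "b 0 = 0 \<or> b 0 = 1 \<or> b 0 = 2 \<or> b 0 = 3 \<or> b 0 = 4" using b6[of 0] by arith
  have b1: "b 1 = a0 (a0 (b 0))" using e[of 0] by (simp only: a0v)
  have b2: "b 2 = a0 (a0 (b 1))" using e[of 1] by (simp only: a0v)
  have b3: "b 3 = a0 (a0 (b 2))" using e[of 2] by (simp only: a0v)
  have b4: "b 4 = a0 (a0 (b 3))" using e[of 3] by (simp only: a0v)
  have mp: "(a0 ^^ m) permutes {..<6}" for m using perm_pow[OF a0_perm6] .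
  show ?thesis
  proof (rule exI[of _ "b 0"], rule cj_eq[OF mp], rule fun_eq6)
    fix n :: nat assume "n \<ge> 6" then show "((a0 ^^ b 0) \<circ> b) n = (b0 \<circ> a0 ^^ b 0) n"
      using bn by (simp add: a0_pow b0_def)
  next
    show "\<forall>n<6. ((a0 ^^ b 0) \<circ> b) n = (b0 \<circ> a0 ^^ b 0) n"
      unfolding all6 using v b1 b2 b3 b4 b5 by (elim disjE) (simp_all add: a0_pow a0_def b0_def)
  qed
qed

lemma r_class:
  assumes rp: "r permutes {..<6}" and rr: "r \<circ> r = id" and rbr: "r \<circ> b0 \<circ> r = b0 \<circ> b0 \<circ> b0"
    and ra: "(r \<circ> a0) \<circ> (r \<circ> a0) \<circ> (r \<circ> a0) = id"
  shows "r = rg \<or> r = rb"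
proof -
  have rr': "r (r n) = n" for n using fun_cong[OF rr, of n] by simp
  have e: "r (b0 n) = b0 (b0 (b0 (r n)))" for n
  proof -
    have "r (b0 (r (r n))) = b0 (b0 (b0 (r n)))" using fun_cong[OF rbr, of "r n"] by simp
    then show ?thesis using rr' by simp
  qed
  have ir: "inj r" using permutes_inj[OF rp] .
  have r6: "n < 6 \<Longrightarrow> r n < 6" for n using permutes_in_image[OF rp] by simp
  have rn: "n \<ge> 6 \<Longrightarrow> r n = n" for n using permutes_not_in[OF rp] by simp
  have ra': "r (a0 (r (a0 (r (a0 n))))) = n" for n using fun_cong[OF ra, of n] by simp
  have r0: "r 0 = 0 \<or> r 0 = 5"
  proof -
    have "r 0 = b0 (b0 (b0 (r 0)))" using e[of 0] by (simp add: b0_def)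
    then show ?thesis using r6[of 0] unfolding lt6 by (auto simp: b0_def)
  qed
  have r5: "r 5 = 0 \<or> r 5 = 5"
  proof -
    have "r 5 = b0 (b0 (b0 (r 5)))" using e[of 5] by (simp add: b0_def)
    then show ?thesis using r6[of 5] unfolding lt6 by (auto simp: b0_def)
  qed
  have n05: "r 0 \<noteq> r 5" using injne[OF ir, of 0 5] by simp
  have n10: "r 1 \<noteq> r 0" using injne[OF ir, of 1 0] by simp
  have n15: "r 1 \<noteq> r 5" using injne[OF ir, of 1 5] by simp
  have r1: "r 1 = 1 \<or> r 1 = 2 \<or> r 1 = 3 \<or> r 1 = 4" using r6[of 1] r0 r5 n05 n10 n15 by arith
  have r2: "r 2 = b0 (b0 (b0 (r 1)))" using e[of 1] by (simp only: b0v)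
  have r4: "r 4 = b0 (b0 (b0 (r 2)))" using e[of 2] by (simp only: b0v)
  have r3: "r 3 = b0 (b0 (b0 (r 4)))" using e[of 4] by (simp only: b0v)
  have c05: "(r 0 = 0 \<and> r 5 = 5) \<or> (r 0 = 5 \<and> r 5 = 0)" using r0 r5 n05 by auto
  have t0: "r (a0 (r (a0 (r (a0 0))))) = 0" and t1: "r (a0 (r (a0 (r (a0 1))))) = 1"
    and t2: "r (a0 (r (a0 (r (a0 2))))) = 2" and t3: "r (a0 (r (a0 (r (a0 3))))) = 3"
    and t4: "r (a0 (r (a0 (r (a0 4))))) = 4" and t5: "r (a0 (r (a0 (r (a0 5))))) = 5"
    using ra' by auto
  show ?thesis
  proof (cases "r 0 = 0")
    case True
    then have s: "r 0 = 0" "r 5 = 5" using c05 by auto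
    show ?thesis using r1
    proof (elim disjE)
      assume h: "r 1 = 1"
      then have "r 2 = 3" "r 4 = 4" "r 3 = 2" using r2 r4 r3 by (simp_all add: b0_def)
      then show ?thesis using t0 s h by (simp add: a0v)
    next
      assume h: "r 1 = 2"
      then have v: "r 2 = 1" "r 4 = 3" "r 3 = 4" using r2 r4 r3 by (simp_all add: b0_def)
      have "r = rb"
        by (rule fun_eq6) (use rn s h v in \<open>auto simp: rb_def all6\<close>)
      then show ?thesis by simp
    next
      assume h: "r 1 = 3"
      then have "r 2 = 4" "r 4 = 2" "r 3 = 1" using r2 r4 r3 by (simp_all add: b0_def)
      then show ?thesis using t0 t1 t2 t3 t4 s h by (simp add: a0v)
    next
      assume h: "r 1 = 4"
      then have "r 2 = 2" "r 4 = 1" "r 3 = 3" using r2 r4 r3 by (simp_all add: b0_def)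
      then show ?thesis using t0 t1 t2 t3 t4 s h by (simp add: a0v)
    qed
  next
    case False
    then have s: "r 0 = 5" "r 5 = 0" using c05 by auto
    show ?thesis using r1
    proof (elim disjE)
      assume h: "r 1 = 1"
      then have "r 2 = 3" "r 4 = 4" "r 3 = 2" using r2 r4 r3 by (simp_all add: b0_def)
      then show ?thesis using t0 t1 t2 t3 t4 t5 s h by (simp add: a0v)
    next
      assume h: "r 1 = 2"
      then have "r 2 = 1" "r 4 = 3" "r 3 = 4" using r2 r4 r3 by (simp_all add: b0_def)
      then show ?thesis using t0 t1 t2 t3 t4 t5 s h by (simp add: a0v)
    next
      assume h: "r 1 = 3"
      then have "r 2 = 4" "r 4 = 2" "r 3 = 1" using r2 r4 r3 by (simp_all add: b0_def)
      then show ?thesis using t0 t1 t2 t3 t4 t5 s h by (simp add: a0v)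
    next
      assume h: "r 1 = 4"
      then have v: "r 2 = 2" "r 4 = 1" "r 3 = 3" using r2 r4 r3 by (simp_all add: b0_def)
      have "r = rg"
        by (rule fun_eq6) (use rn s h v in \<open>auto simp: rg_def all6\<close>)
      then show ?thesis by simp
    qed
  qed
qed

lemma big: "6 \<le> n \<Longrightarrow> a0 n = n" "6 \<le> n \<Longrightarrow> b0 n = n" "6 \<le> n \<Longrightarrow> rb n = n"
  by (simp_all add: a0_def b0_def rb_def)
lemma rbv: "rb 0 = 0" "rb 1 = 2" "rb 2 = 1" "rb 3 = 4" "rb 4 = 3" "rb 5 = 5" "rb (Suc 0) = 2" by (simp_all add: rb_def)

lemma tw_0_1: "Transposition.transpose 0 1 = rb \<circ> a0 \<circ> b0 \<circ> a0 \<circ> rb \<circ> a0"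
  by (rule fun_eq6) (simp_all add: big transpose_def all6 a0v b0v rbv)

lemma tw_0_2: "Transposition.transpose 0 2 = a0 \<circ> b0 \<circ> a0 \<circ> rb \<circ> a0 \<circ> rb"
  by (rule fun_eq6) (simp_all add: big transpose_def all6 a0v b0v rbv)

lemma tw_0_3: "Transposition.transpose 0 3 = b0 \<circ> a0 \<circ> a0 \<circ> rb \<circ> a0"
  by (rule fun_eq6) (simp_all add: big transpose_def all6 a0v b0v rbv)

lemma tw_0_4: "Transposition.transpose 0 4 = a0 \<circ> a0 \<circ> rb \<circ> a0 \<circ> b0"
  by (rule fun_eq6) (simp_all add: big transpose_def all6 a0v b0v rbv)

lemma tw_1_2: "Transposition.transpose 1 2 = a0 \<circ> rb \<circ> a0 \<circ> b0 \<circ> a0 \<circ> rb"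
  by (rule fun_eq6) (simp_all add: big transpose_def all6 a0v b0v rbv)

lemma tw_1_3: "Transposition.transpose 1 3 = b0 \<circ> a0 \<circ> b0 \<circ> rb \<circ> a0 \<circ> b0"
  by (rule fun_eq6) (simp_all add: big transpose_def all6 a0v b0v rbv)

lemma tw_1_4: "Transposition.transpose 1 4 = b0 \<circ> rb"
  by (rule fun_eq6) (simp_all add: big transpose_def all6 a0v b0v rbv)

lemma tw_2_3: "Transposition.transpose 2 3 = rb \<circ> b0"
  by (rule fun_eq6) (simp_all add: big transpose_def all6 a0v b0v rbv)

lemma tw_2_4: "Transposition.transpose 2 4 = a0 \<circ> b0 \<circ> a0 \<circ> rb \<circ> a0 \<circ> a0"
  by (rule fun_eq6) (simp_all add: big transpose_def all6 a0v b0v rbv)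

lemma tw_3_4: "Transposition.transpose 3 4 = a0 \<circ> rb \<circ> a0 \<circ> b0 \<circ> a0"
  by (rule fun_eq6) (simp_all add: big transpose_def all6 a0v b0v rbv)

lemma E_perm: "\<alpha> \<in> quartic_exps \<Longrightarrow> \<tau> permutes {..<6} \<Longrightarrow> \<alpha> \<circ> \<tau> \<in> quartic_exps"
  unfolding quartic_exps_def
  using sum.permute[of \<tau> "{..<6}" \<alpha>] permutes_not_in[of \<tau> "{..<6}"] by auto

lemma pgrp_cj:
  assumes pg: "pgrp G" and s: "\<sigma> permutes {..<6}"
  shows "pgrp (cj \<sigma> ` G)"
  unfolding pgrp_def
proof (intro conjI ballI)
  fix g' assume "g' \<in> cj \<sigma> ` G"
  then obtain g where g: "g \<in> G" "g' = cj \<sigma> g" by auto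
  have gp: "g permutes {..<6}" using pg g unfolding pgrp_def by auto
  show "g' permutes {..<6}" using cj_perm[OF s gp] g by simp
  show "Hilbert_Choice.inv g' \<in> cj \<sigma> ` G" using cj_inv[OF s gp] g pg unfolding pgrp_def by auto
  fix h' assume "h' \<in> cj \<sigma> ` G"
  then obtain h where h: "h \<in> G" "h' = cj \<sigma> h" by auto
  have "g \<circ> h \<in> G" using g h pg unfolding pgrp_def by auto
  then have "cj \<sigma> (g \<circ> h) \<in> cj \<sigma> ` G" by (rule imageI)
  then show "g' \<circ> h' \<in> cj \<sigma> ` G" using cj_comp[OF s, of g h] g h by simp
next
  have "id \<in> G" using pg unfolding pgrp_def by auto
  then show "id \<in> cj \<sigma> ` G" using cj_id[OF s] by (metis image_eqI)
qed

lemma bad_case: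
  assumes pg: "pgrp H" and cH: "card H = 120" and gens: "a0 \<in> H" "b0 \<in> H" "rb \<in> H"
    and tr: "\<exists>g\<in>H. g 0 = 5"
  shows False
proof -
  have cl: "g \<in> H \<Longrightarrow> h \<in> H \<Longrightarrow> g \<circ> h \<in> H" for g h using pg unfolding pgrp_def by auto
  have idH: "id \<in> H" using pg unfolding pgrp_def by auto
  have t01: "Transposition.transpose 0 1 \<in> H" unfolding tw_0_1 by (intro cl gens)
  have t02: "Transposition.transpose 0 2 \<in> H" unfolding tw_0_2 by (intro cl gens)
  have t03: "Transposition.transpose 0 3 \<in> H" unfolding tw_0_3 by (intro cl gens)
  have t04: "Transposition.transpose 0 4 \<in> H" unfolding tw_0_4 by (intro cl gens)
  have t12: "Transposition.transpose 1 2 \<in> H" unfolding tw_1_2 by (intro cl gens)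
  have t13: "Transposition.transpose 1 3 \<in> H" unfolding tw_1_3 by (intro cl gens)
  have t14: "Transposition.transpose 1 4 \<in> H" unfolding tw_1_4 by (intro cl gens)
  have t23: "Transposition.transpose 2 3 \<in> H" unfolding tw_2_3 by (intro cl gens)
  have t24: "Transposition.transpose 2 4 \<in> H" unfolding tw_2_4 by (intro cl gens)
  have t34: "Transposition.transpose 3 4 \<in> H" unfolding tw_3_4 by (intro cl gens)
  have t10: "Transposition.transpose 1 0 \<in> H" using t01 by (simp add: transpose_commute)
  have t20: "Transposition.transpose 2 0 \<in> H" using t02 by (simp add: transpose_commute)
  have t30: "Transposition.transpose 3 0 \<in> H" using t03 by (simp add: transpose_commute)
  have t40: "Transposition.transpose 4 0 \<in> H" using t04 by (simp add: transpose_commute)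
  have t21: "Transposition.transpose 2 1 \<in> H" using t12 by (simp add: transpose_commute)
  have t31: "Transposition.transpose 3 1 \<in> H" using t13 by (simp add: transpose_commute)
  have t41: "Transposition.transpose 4 1 \<in> H" using t14 by (simp add: transpose_commute)
  have t32: "Transposition.transpose 3 2 \<in> H" using t23 by (simp add: transpose_commute)
  have t42: "Transposition.transpose 4 2 \<in> H" using t24 by (simp add: transpose_commute)
  have t43: "Transposition.transpose 4 3 \<in> H" using t34 by (simp add: transpose_commute)
  have tH: "Transposition.transpose x y \<in> H" if "x \<in> {..<5}" "y \<in> {..<5}" "x \<noteq> y" for x y
  proof -
    have "x = 0 \<or> x = 1 \<or> x = 2 \<or> x = 3 \<or> x = 4" "y = 0 \<or> y = 1 \<or> y = 2 \<or> y = 3 \<or> y = 4"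
      using that by auto
    then show ?thesis using that t01 t10 t02 t20 t03 t30 t04 t40 t12 t21 t13 t31 t14 t41 t23 t32 t24 t42 t34 t43
      by auto
  qed
  have sub: "{p. p permutes {..<5}} \<subseteq> H"
  proof
    fix p assume "p \<in> {p. p permutes {..<5::nat}}"
    then have "p permutes {..<5::nat}" by simp
    then show "p \<in> H"
    proof (rule permutes_induct[OF _ finite_lessThan, where P = "\<lambda>p. p \<in> H"])
      show "id \<in> H" by (rule idH)
      fix x y q assume "x \<in> {..<5::nat}" "y \<in> {..<5}" "x \<noteq> y" "q \<in> H"
      then show "Transposition.transpose x y \<circ> q \<in> H" using cl tH by blast
    qed
  qed
  have finH: "finite H" using cH by (metis card.infinite zero_neq_numeral)
  have "card {p. p permutes {..<5::nat}} = fact 5" by (rule card_permutations) auto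
  then have "card {p. p permutes {..<5::nat}} = card H" using cH by (simp add: fact_numeral)
  then have eq: "{p. p permutes {..<5}} = H" using card_subset_eq[OF finH sub] by simp
  obtain g where "g \<in> H" "g 0 = 5" using tr by auto
  then have "g permutes {..<5}" using eq by auto
  then have "g 0 \<in> {..<5}" using permutes_in_image by fastforce
  then show False using \<open>g 0 = 5\<close> by simp
qed


lemma qf_perm:
  assumes qf: "quartic_form F" and s: "\<sigma> permutes {..<6}"
  shows "quartic_form (\<lambda>x. F (x \<circ> \<sigma>))"
proof -
  obtain a where a: "\<forall>x. F x = (\<Sum>\<alpha>\<in>quartic_exps. a \<alpha> * (\<Prod>i<6. x i ^ \<alpha> i))"
    using qf unfolding quartic_form_def by blast
  let ?si = "Hilbert_Choice.inv \<sigma>"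
  have sip: "?si permutes {..<6}" using permutes_inv[OF s] .
  have "F (x \<circ> \<sigma>) = (\<Sum>\<beta>\<in>quartic_exps. a (\<beta> \<circ> \<sigma>) * (\<Prod>i<6. x i ^ \<beta> i))" for x
  proof -
    have "F (x \<circ> \<sigma>) = (\<Sum>\<alpha>\<in>quartic_exps. a \<alpha> * (\<Prod>i<6. x (\<sigma> i) ^ \<alpha> i))" using a by simp
    also have "\<dots> = (\<Sum>\<beta>\<in>quartic_exps. a (\<beta> \<circ> \<sigma>) * (\<Prod>i<6. x i ^ \<beta> i))"
    proof (rule sum.reindex_bij_witness[where i = "\<lambda>\<beta>. \<beta> \<circ> \<sigma>" and j = "\<lambda>\<alpha>. \<alpha> \<circ> ?si"])
      show "\<alpha> \<circ> ?si \<circ> \<sigma> = \<alpha>" if "\<alpha> \<in> quartic_exps" for \<alpha>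
        using permutes_inv_o(2)[OF s] by (simp add: o_assoc[symmetric])
      show "\<alpha> \<circ> ?si \<in> quartic_exps" if "\<alpha> \<in> quartic_exps" for \<alpha> using E_perm[OF that sip] .
      show "\<beta> \<circ> \<sigma> \<circ> ?si = \<beta>" if "\<beta> \<in> quartic_exps" for \<beta>
        using permutes_inv_o(1)[OF s] by (simp add: o_assoc[symmetric])
      show "\<beta> \<circ> \<sigma> \<in> quartic_exps" if "\<beta> \<in> quartic_exps" for \<beta> using E_perm[OF that s] .
      show "a (\<alpha> \<circ> ?si \<circ> \<sigma>) * (\<Prod>i<6. x i ^ (\<alpha> \<circ> ?si) i) = a \<alpha> * (\<Prod>i<6. x (\<sigma> i) ^ \<alpha> i)"
        if "\<alpha> \<in> quartic_exps" for \<alpha>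
      proof -
        have "(\<Prod>i<6. x i ^ (\<alpha> \<circ> ?si) i) = (\<Prod>i<6. x (\<sigma> i) ^ (\<alpha> \<circ> ?si) (\<sigma> i))"
          using prod.permute[OF s, of "\<lambda>i. x i ^ (\<alpha> \<circ> ?si) i"] by (simp add: o_def)
        also have "\<dots> = (\<Prod>i<6. x (\<sigma> i) ^ \<alpha> i)" by (simp add: permutes_inverses(2)[OF s])
        finally show ?thesis using permutes_inv_o(2)[OF s] by (simp add: o_assoc[symmetric])
      qed
    qed
    finally show ?thesis .
  qed
  then show ?thesis unfolding quartic_form_def by (intro exI[of _ "\<lambda>\<beta>. a (\<beta> \<circ> \<sigma>)"] allI) simp
qed

lemma Xt_perm: "\<tau> permutes {..<6} \<Longrightarrow> Xt_eq t (x \<circ> \<tau>) = Xt_eq t x"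
  unfolding Xt_eq_def using sum.permute[of \<tau> "{..<6}" "\<lambda>i. x i ^ 4"] sum.permute[of \<tau> "{..<6}" "\<lambda>i. x i ^ 2"]
  by (simp add: o_def)

lemma sym_carrier: "carrier (Sym n) = {p. p permutes {..<n}}" by (simp add: Sym_def)
lemma sym_mult: "x \<otimes>\<^bsub>Sym n\<^esub> y = x \<circ> y" by (simp add: Sym_def)
lemma sym_one: "\<one>\<^bsub>Sym n\<^esub> = id" by (simp add: Sym_def)
lemma sym_inv: "g permutes {..<n} \<Longrightarrow> m_inv (Sym n) g = Hilbert_Choice.inv g"
  unfolding m_inv_def sym_carrier sym_mult sym_one
proof (rule the_equality)
  assume g: "g permutes {..<n}"
  show "Hilbert_Choice.inv g \<in> {p. p permutes {..<n}} \<and> g \<circ> Hilbert_Choice.inv g = id \<and> Hilbert_Choice.inv g \<circ> g = id"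
    using permutes_inv[OF g] permutes_inv_o[OF g] by simp
  fix y assume "y \<in> {p. p permutes {..<n}} \<and> g \<circ> y = id \<and> y \<circ> g = id"
  then have "y \<circ> g = id" by simp
  then have "y \<circ> g \<circ> Hilbert_Choice.inv g = Hilbert_Choice.inv g" by simp
  then show "y = Hilbert_Choice.inv g" using permutes_inv_o(1)[OF g] by (simp add: o_assoc[symmetric])
qed

lemma pow5: "f ^^ 5 = f \<circ> f \<circ> f \<circ> f \<circ> f"
  by (simp add: eval_nat_numeral o_assoc)

lemma a0_pow_comm: "(a0 ^^ m) \<circ> a0 = a0 \<circ> (a0 ^^ m)"
  by (rule ext) (simp add: funpow_swap1)

lemma rbrb: "rb \<circ> rb = id" by (rule fun_eq6) (simp_all add: big all6 rbv)
lemma rbb0: "rb \<circ> b0 \<circ> rb = b0 \<circ> b0 \<circ> b0" by (rule fun_eq6) (simp_all add: big all6 rbv b0v)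
lemma rba0: "(rb \<circ> a0) \<circ> (rb \<circ> a0) \<circ> (rb \<circ> a0) = id" by (rule fun_eq6) (simp_all add: big all6 rbv a0v)
lemma a0ne: "a0 \<noteq> id" using a0v(1) by (metis id_apply zero_neq_one)

theorem lemma4p11:
  fixes G :: "(nat \<Rightarrow> nat) set" and F :: "(nat \<Rightarrow> complex) \<Rightarrow> complex"
  assumes "subgroup G (Sym 6)"
    and "(Sym 6)\<lparr>carrier := G\<rparr> \<cong> Sym 5"
    and "\<forall>i<6. \<forall>j<6. \<exists>g\<in>G. g i = j"
    and "quartic_threefold_eq F"
    and "\<forall>g\<in>G. invariant_under F g"
    and "\<forall>x\<in>Sigma10. F x = 0"
  shows "\<exists>c. c \<noteq> 0 \<and> (\<forall>x\<in>hyperplane. F x = c * Xt_eq (1/6) x)"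
proof -
  note sg = assms(1)
  have Gp: "g permutes {..<6}" if "g \<in> G" for g
    using subgroup.subset[OF sg] that by (auto simp: sym_carrier)
  have Gc: "g \<circ> h \<in> G" if "g \<in> G" "h \<in> G" for g h
    using subgroup.m_closed[OF sg that] by (simp add: sym_mult)
  have Gid: "id \<in> G" using subgroup.one_closed[OF sg] by (simp add: sym_one)
  have Gi: "Hilbert_Choice.inv g \<in> G" if "g \<in> G" for g
    using subgroup.m_inv_closed[OF sg that] sym_inv[OF Gp[OF that]] by simp
  have pg: "pgrp G" unfolding pgrp_def using Gp Gc Gid Gi by blast
  obtain \<psi> where psi: "\<psi> \<in> iso ((Sym 6)\<lparr>carrier := G\<rparr>) (Sym 5)" using assms(2) unfolding is_iso_def by auto
  have hom: "\<psi> (x \<circ> y) = \<psi> x \<circ> \<psi> y" if "x \<in> G" "y \<in> G" for x y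
    using psi that unfolding iso_def hom_def by (auto simp: Sym_def)
  have bij: "bij_betw \<psi> G {p. p permutes {..<5}}" using psi unfolding iso_def by (simp add: Sym_def)
  have "card G = card {p. p permutes {..<5::nat}}" using bij_betw_same_card[OF bij] .
  also have "\<dots> = fact 5" by (rule card_permutations) auto
  finally have cardG: "card G = 120" by (simp add: fact_numeral)
  have injp: "x = y" if "x \<in> G" "y \<in> G" "\<psi> x = \<psi> y" for x y
    using bij_betw_imp_inj_on[OF bij] that by (meson inj_onD)
  have surjp: "\<exists>x\<in>G. \<psi> x = p" if "p permutes {..<5}" for p
    using bij_betw_imp_surj_on[OF bij] that by (metis imageE mem_Collect_eq)
  have psid: "\<psi> id = id"
  proof -
    have e: "\<psi> id = \<psi> id \<circ> \<psi> id" using hom[OF Gid Gid] by simp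
    have p: "\<psi> id permutes {..<5}" using bij_betw_apply[OF bij Gid] by simp
    have "Hilbert_Choice.inv (\<psi> id) \<circ> \<psi> id = Hilbert_Choice.inv (\<psi> id) \<circ> (\<psi> id \<circ> \<psi> id)" using e by metis
    then show ?thesis using permutes_inv_o(2)[OF p] by (simp add: o_assoc)
  qed
  obtain a where a: "a \<in> G" "\<psi> a = a0" using surjp[OF a0_perm5] by blast
  obtain b where b: "b \<in> G" "\<psi> b = b0" using surjp[OF b0_perm5] by blast
  obtain r where r: "r \<in> G" "\<psi> r = rb" using surjp[OF rb_perm5] by blast
  have a5: "a ^^ 5 = id"
  proof -
    have "\<psi> (a \<circ> a \<circ> a \<circ> a \<circ> a) = a0 \<circ> a0 \<circ> a0 \<circ> a0 \<circ> a0" using a by (simp add: hom Gc)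
    also have "\<dots> = id" using a0_5 by (simp add: pow5)
    finally have "a \<circ> a \<circ> a \<circ> a \<circ> a = id" using injp[OF _ Gid] a Gc psid by (metis)
    then show ?thesis by (simp add: pow5)
  qed
  have an: "a \<noteq> id" using a psid a0ne by auto
  have ba: "b \<circ> a = a \<circ> a \<circ> b"
  proof (rule injp)
    show "b \<circ> a \<in> G" "a \<circ> a \<circ> b \<in> G" using a b Gc by auto
    show "\<psi> (b \<circ> a) = \<psi> (a \<circ> a \<circ> b)" using a b Gc b0a0 by (simp add: hom)
  qed
  have rr: "r \<circ> r = id"
  proof (rule injp)
    show "r \<circ> r \<in> G" "id \<in> G" using r Gc Gid by auto
    show "\<psi> (r \<circ> r) = \<psi> id" using r rbrb psid by (simp add: hom)
  qed
  have rbr: "r \<circ> b \<circ> r = b \<circ> b \<circ> b"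
  proof (rule injp)
    show "r \<circ> b \<circ> r \<in> G" "b \<circ> b \<circ> b \<in> G" using r b Gc by auto
    show "\<psi> (r \<circ> b \<circ> r) = \<psi> (b \<circ> b \<circ> b)" using r b Gc rbb0 by (simp add: hom)
  qed
  have ra: "(r \<circ> a) \<circ> (r \<circ> a) \<circ> (r \<circ> a) = id"
  proof (rule injp)
    show "(r \<circ> a) \<circ> (r \<circ> a) \<circ> (r \<circ> a) \<in> G" "id \<in> G" using r a Gc Gid by auto
    show "\<psi> ((r \<circ> a) \<circ> (r \<circ> a) \<circ> (r \<circ> a)) = \<psi> id" using r a Gc rba0 psid by (simp add: hom)
  qed
  obtain \<sigma> where sg1: "\<sigma> permutes {..<6}" "\<sigma> \<circ> a = a0 \<circ> \<sigma>" using five_cycle[OF Gp[OF a(1)] a5 an] by blast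
  have ca: "cj \<sigma> a = a0" using cj_eq[OF sg1] .
  define b1 where "b1 = cj \<sigma> b"
  have b1p: "b1 permutes {..<6}" unfolding b1_def using cj_perm[OF sg1(1) Gp[OF b(1)]] .
  have "b1 \<circ> a0 = a0 \<circ> a0 \<circ> b1"
    using arg_cong[OF ba, of "cj \<sigma>"] unfolding b1_def by (simp add: cj_comp[OF sg1(1)] ca)
  then obtain m where m: "cj (a0 ^^ m) b1 = b0" using b_norm[OF b1p] by blast
  have mp: "(a0 ^^ m) permutes {..<6}" using perm_pow[OF a0_perm6] .
  define \<sigma>' where "\<sigma>' = (a0 ^^ m) \<circ> \<sigma>"
  have sp: "\<sigma>' permutes {..<6}" unfolding \<sigma>'_def using permutes_compose[OF sg1(1) mp] .
  have cjs: "cj \<sigma>' g = cj (a0 ^^ m) (cj \<sigma> g)" for g unfolding \<sigma>'_def using cj_cj[OF sg1(1) mp] by simp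
  have ca': "cj \<sigma>' a = a0" using cjs ca cj_eq[OF mp a0_pow_comm] by simp
  have cb': "cj \<sigma>' b = b0" using cjs m unfolding b1_def by simp
  define r' where "r' = cj \<sigma>' r"
  have r'p: "r' permutes {..<6}" unfolding r'_def using cj_perm[OF sp Gp[OF r(1)]] .
  have rr': "r' \<circ> r' = id" using arg_cong[OF rr, of "cj \<sigma>'"] unfolding r'_def by (simp add: cj_comp[OF sp] cj_id[OF sp])
  have rbr': "r' \<circ> b0 \<circ> r' = b0 \<circ> b0 \<circ> b0" using arg_cong[OF rbr, of "cj \<sigma>'"] unfolding r'_def by (simp add: cj_comp[OF sp] cb')
  have ra': "(r' \<circ> a0) \<circ> (r' \<circ> a0) \<circ> (r' \<circ> a0) = id" using arg_cong[OF ra, of "cj \<sigma>'"] unfolding r'_def by (simp add: cj_comp[OF sp] cj_id[OF sp] ca')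
  define G' where "G' = cj \<sigma>' ` G"
  have pg': "pgrp G'" unfolding G'_def using pgrp_cj[OF pg sp] .
  have cG': "card G' = 120" unfolding G'_def using card_image[OF inj_on_subset[OF cj_inj[OF sp]]] cardG by simp
  have a0G': "a0 \<in> G'" unfolding G'_def using ca' a(1) by (metis image_eqI)
  have b0G': "b0 \<in> G'" unfolding G'_def using cb' b(1) by (metis image_eqI)
  have r'G': "r' \<in> G'" unfolding G'_def r'_def using r(1) by simp
  let ?si = "Hilbert_Choice.inv \<sigma>'"
  have sip: "?si permutes {..<6}" using permutes_inv[OF sp] .
  have si6: "?si n < 6" if "n < 6" for n using permutes_in_image[OF sip] that by simp
  have cjv: "cj \<sigma>' g n = \<sigma>' (g (?si n))" for g n by (simp add: cj_def)
  consider "r' = rg" | "r' = rb" using r_class[OF r'p rr' rbr' ra'] by blast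
  then show ?thesis
  proof cases
    case 2
    have "\<exists>g\<in>G'. g 0 = 5"
    proof -
      have "?si 0 < 6" "?si 5 < 6" by (simp_all add: si6)
      then obtain g where g: "g \<in> G" "g (?si 0) = ?si 5" using assms(3) by blast
      have "cj \<sigma>' g 0 = 5" using g(2) cjv permutes_inverses(1)[OF sp] by simp
      then show ?thesis unfolding G'_def using g(1) by blast
    qed
    then have False using bad_case[OF pg' cG' a0G' b0G'] r'G' 2 by simp
    then show ?thesis ..
  next
    case 1
    define F' where "F' = (\<lambda>x. F (x \<circ> \<sigma>'))"
    have qf': "quartic_form F'" unfolding F'_def using qf_perm[OF _ sp] assms(4) unfolding quartic_threefold_eq_def by blast
    have inv': "\<forall>g\<in>G'. invariant_under F' g"
    proof
      fix g' assume "g' \<in> G'"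
      then obtain g where g: "g \<in> G" "g' = cj \<sigma>' g" unfolding G'_def by auto
      obtain c where c: "\<forall>x\<in>hyperplane. F (x \<circ> g) = c * F x" using assms(5) g(1) unfolding invariant_under_def by blast
      have "F' (x \<circ> g') = c * F' x" if x: "x \<in> hyperplane" for x
      proof -
        have "x \<circ> g' \<circ> \<sigma>' = (x \<circ> \<sigma>') \<circ> g"
          using g(2) permutes_inv_o(2)[OF sp] by (simp add: cj_def o_assoc[symmetric])
        then show ?thesis unfolding F'_def using c hyp_perm[OF x sp] by simp
      qed
      then show "invariant_under F' g'" unfolding invariant_under_def by blast
    qed
    have nz': "\<exists>x\<in>hyperplane. F' x \<noteq> 0"
    proof -
      obtain x where x: "x \<in> hyperplane" "F x \<noteq> 0" using assms(4) unfolding quartic_threefold_eq_def by blast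
      have "F' (x \<circ> ?si) = F x" unfolding F'_def using permutes_inv_o(2)[OF sp] by (simp add: o_assoc[symmetric])
      then show ?thesis using x hyp_perm[OF x(1) sip] by metis
    qed
    have zq': "F' q0 = 0"
    proof -
      have "q0 \<circ> \<sigma>' \<in> Sigma10" unfolding Sigma10_def using sp by (auto simp: q0_def o_def)
      then show ?thesis unfolding F'_def using assms(6) by simp
    qed
    interpret cr: core G' F'
      by (unfold_locales) (use pg' cG' a0G' b0G' r'G' 1 qf' inv' nz' zq' in auto)
    obtain c where c: "c \<noteq> 0" "\<forall>x\<in>hyperplane. F' x = c * Xt_eq (1/6) x" using cr.core_main by blast
    have "F x = c * Xt_eq (1/6) x" if x: "x \<in> hyperplane" for x
    proof -
      have "F x = F' (x \<circ> ?si)" unfolding F'_def using permutes_inv_o(2)[OF sp] by (simp add: o_assoc[symmetric])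
      also have "\<dots> = c * Xt_eq (1/6) (x \<circ> ?si)" using c(2) hyp_perm[OF x sip] by simp
      also have "\<dots> = c * Xt_eq (1/6) x" using Xt_perm[OF sip] by simp
      finally show ?thesis .
    qed
    then show ?thesis using c(1) by blast
  qed
qed

end
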